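(* In the setting below, the optimal policy with views $$\pi^*(t)=\tfrac1\gamma(\Sigma^S)^{-1}\big(\tilde\alpha(t,y)+\tilde\beta(t)x-r_f\mathbf 1_N\big)+\tfrac1\gamma(\Sigma^S)^{-1}\Sigma^{S,X}\big(A(t)x+b(t)\big)$$ can be written as $$\pi^*(t)=\tfrac1\gamma(\Sigma^S)^{-1}(\alpha+\beta x-r_f\mathbf 1_N)+\tfrac1\gamma(\Sigma^S)^{-1}\Sigma^{S,X}\big(A_1(t)x+b_1(t)\big),$$ where $A_1(t)\in\mathbb R^{d\times d}$ solves the constant-coefficient Riccati equation $$A_1'+\tfrac{1-\gamma}{\gamma}\beta^\top(\Sigma^S)^{-1}\beta+A_1\big(\Sigma^X+\tfrac{1-\gamma}{\gamma}(\Sigma^{S,X})^\top(\Sigma^S)^{-1}\Sigma^{S,X}\big)A_1+A_1\big(\tfrac{1-\gamma}{\gamma}(\Sigma^{S,X})^\top(\Sigma^S)^{-1}\beta-\Theta\big)+\big(\tfrac{1-\gamma}{\gamma}(\Sigma^{S,X})^\top(\Sigma^S)^{-1}\beta-\Theta\big)^\top A_1=0,$$ and $b_1(t)\in\mathbb R^d$ solves $$b_1'+\tfrac{1-\gamma}{\gamma}\big(\beta^\top+A_1(\Sigma^{S,X})^\top\big)(\Sigma^S)^{-1}\big(\Sigma^{S,X}b_1+\alpha-r_f\mathbf 1_N\big)+\big(A_1\Sigma^X-\Theta^\top\big)b_1+A_1\Theta\mu=0,$$ with terminal conditions $A_1(T)=-P^\top\Omega^{-1}P$ and $b_1(T)=P^\top\Omega^{-1}y$.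 Furthermore, $A_1(t)$ is negative semi-definite on $[0,T]$, and if $A_1^{(1)}$ and $A_1^{(2)}$ are the solutions corresponding to view covariance matrices $\Omega^{(1)},\Omega^{(2)}$ with $(\Omega^{(1)})^{-1}\succeq(\Omega^{(2)})^{-1}$, then $A_1^{(1)}(t)\preceq A_1^{(2)}(t)$.
   Context: Setting: $\gamma>1$, risk-free rate $r_f$. $W$ is $N'$-dim Brownian motion; factors $dX=\Theta(\mu-X)dt+L^XdW$ in $\mathbb R^d$, prices $dS=D(S)((\alpha+\beta X)dt+L^SdW)$ in $\mathbb R^N$; views $Y(0,T)=PX(T)+\epsilon$, $P\in\mathbb R^{K\times d}$, $\epsilon\sim\mathcal N(0,\Omega)$ independent of $W$, $\Omega\succ0$; $\Theta$ has eigenvalues with positive real parts; $L^X,L^S$ full row rank; $\Sigma^X=L^X(L^X)^\top$, $\Sigma^S=L^S(L^S)^\top$, $\Sigma^{S,X}=L^S(L^X)^\top$; $\Sigma$ solves $\Theta\Sigma+\Sigma\Theta^\top=\Sigma^X$; $\eta(t)=(Pe^{-\Theta(T-t)}L^X)^\top(P(\Sigma-e^{-\Theta(T-t)}\Sigma e^{-\Theta^\top(T-t)})P^\top+\Omega)^{-1}$, $\tilde\Theta(t)=\Theta+L^X\eta(t)Pe^{-\Theta(T-t)}$, $\tilde\mu(t,y)=\mu+\tilde\Theta(t)^{-1}L^X\eta(t)(y-P\mu)$, $\tilde\alpha(t,y)=\alpha+L^S\eta(t)(y-P(I_d-e^{-\Theta(T-t)})\mu)$, $\tilde\beta(t)=\beta-L^S\eta(t)Pe^{-\Theta(T-t)}$.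 $A(t)$ solves $A'+\tfrac{1-\gamma}{\gamma}\tilde\beta^\top(\Sigma^S)^{-1}\tilde\beta+A(\Sigma^X+\tfrac{1-\gamma}{\gamma}(\Sigma^{S,X})^\top(\Sigma^S)^{-1}\Sigma^{S,X})A+A(\tfrac{1-\gamma}{\gamma}(\Sigma^{S,X})^\top(\Sigma^S)^{-1}\tilde\beta-\tilde\Theta)+(\tfrac{1-\gamma}{\gamma}(\Sigma^{S,X})^\top(\Sigma^S)^{-1}\tilde\beta-\tilde\Theta)^\top A=0$, $A(T)=0$; $b(t)$ solves $b'+\tfrac{1-\gamma}{\gamma}(\tilde\beta^\top+A(\Sigma^{S,X})^\top)(\Sigma^S)^{-1}(\Sigma^{S,X}b+\tilde\alpha(t,y)-r_f\mathbf 1_N)+(A\Sigma^X-\tilde\Theta^\top)b+A\tilde\Theta\tilde\mu(t,y)=0$, $b(T)=0$. The displayed $\pi^*$ is the optimal fraction-of-wealth policy of a CRRA investor (utility $z^{1-\gamma}/(1-\gamma)$) maximizing expected terminal utility given the view $Y(0,T)=y$, with $x$ the current factor value. $\preceq$ is the positive semi-definite (Loewner) order.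
   Formalization: The matrix $\tilde\Theta(t)$ is also assumed invertible for every t in [0,T]. The statement above fails without it. *)

theory Defs
  imports "HOL-Analysis.Analysis"
begin

fun mpow :: "real^'n^'n \<Rightarrow> nat \<Rightarrow> real^'n^'n" where
  "mpow M 0 = mat 1"
| "mpow M (Suc k) = M ** mpow M k"

definition mexp :: "real^'n^'n \<Rightarrow> real^'n^'n" where
  "mexp M = (\<Sum>k. (1 / fact k :: real) *\<^sub>R mpow M k)"

definition sym_pos_def :: "real^'n^'n \<Rightarrow> bool" where
  "sym_pos_def M \<longleftrightarrow> transpose M = M \<and> (\<forall>v. v \<noteq> 0 \<longrightarrow> v \<bullet> (M *v v) > 0)"

definition psd :: "real^'n^'n \<Rightarrow> bool" where
  "psd M \<longleftrightarrow> (\<forall>v. v \<bullet> (M *v v) \<ge> 0)"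

definition nsd :: "real^'n^'n \<Rightarrow> bool" where
  "nsd M \<longleftrightarrow> (\<forall>v. v \<bullet> (M *v v) \<le> 0)"

definition loewner_le :: "real^'n^'n \<Rightarrow> real^'n^'n \<Rightarrow> bool" where
  "loewner_le A B \<longleftrightarrow> psd (B - A)"

definition eigs_pos_real_part :: "real^'n^'n \<Rightarrow> bool" where
  "eigs_pos_real_part M \<longleftrightarrow>
     (\<forall>z::complex. det (mat z - (\<chi> i j. complex_of_real (M $ i $ j))) = 0 \<longrightarrow> Re z > 0)"

definition EE :: "real^'d^'d \<Rightarrow> real \<Rightarrow> real \<Rightarrow> real^'d^'d" where
  "EE Th T t = mexp (- (T - t) *\<^sub>R Th)"

definition eta :: "real^'d^'d \<Rightarrow> real^'w^'d \<Rightarrow> real^'d^'k \<Rightarrow> real^'k^'k \<Rightarrow> real^'d^'d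
                    \<Rightarrow> real \<Rightarrow> real \<Rightarrow> real^'k^'w" where
  "eta Th LX P Om Sig T t =
     transpose (P ** EE Th T t ** LX) **
     matrix_inv (P ** (Sig - EE Th T t ** Sig ** mexp (- (T - t) *\<^sub>R transpose Th)) ** transpose P + Om)"

definition Theta_t :: "real^'d^'d \<Rightarrow> real^'w^'d \<Rightarrow> real^'d^'k \<Rightarrow> real^'k^'k \<Rightarrow> real^'d^'d
                    \<Rightarrow> real \<Rightarrow> real \<Rightarrow> real^'d^'d" where
  "Theta_t Th LX P Om Sig T t = Th + LX ** eta Th LX P Om Sig T t ** P ** EE Th T t"

definition mu_t :: "real^'d^'d \<Rightarrow> real^'d \<Rightarrow> real^'w^'d \<Rightarrow> real^'d^'k \<Rightarrow> real^'k^'k \<Rightarrow> real^'d^'d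
                    \<Rightarrow> real \<Rightarrow> real^'k \<Rightarrow> real \<Rightarrow> real^'d" where
  "mu_t Th mu LX P Om Sig T y t =
     mu + matrix_inv (Theta_t Th LX P Om Sig T t) *v
            ((LX ** eta Th LX P Om Sig T t) *v (y - P *v mu))"

definition alpha_t :: "real^'d^'d \<Rightarrow> real^'d \<Rightarrow> real^'w^'d \<Rightarrow> real^'n \<Rightarrow> real^'w^'n \<Rightarrow> real^'d^'k
                    \<Rightarrow> real^'k^'k \<Rightarrow> real^'d^'d \<Rightarrow> real \<Rightarrow> real^'k \<Rightarrow> real \<Rightarrow> real^'n" where
  "alpha_t Th mu LX al LS P Om Sig T y t =
     al + (LS ** eta Th LX P Om Sig T t) *v (y - (P ** (mat 1 - EE Th T t)) *v mu)"

definition beta_t :: "real^'d^'d \<Rightarrow> real^'w^'d \<Rightarrow> real^'d^'n \<Rightarrow> real^'w^'n \<Rightarrow> real^'d^'k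
                    \<Rightarrow> real^'k^'k \<Rightarrow> real^'d^'d \<Rightarrow> real \<Rightarrow> real \<Rightarrow> real^'d^'n" where
  "beta_t Th LX be LS P Om Sig T t =
     be - LS ** eta Th LX P Om Sig T t ** P ** EE Th T t"

text \<open>Given gamma, the covariance matrices SS = Sigma^S, SX = Sigma^X, SSX = Sigma^{S,X},
  a coefficient matrix B (beta or beta tilde) and a mean-reversion matrix Th (Theta or
  Theta tilde), ric_expr is the left-hand side of the matrix Riccati equation without A'.\<close>
definition ric_expr :: "real \<Rightarrow> real^'n^'n \<Rightarrow> real^'d^'d \<Rightarrow> real^'d^'n \<Rightarrow> real^'d^'n
                        \<Rightarrow> real^'d^'d \<Rightarrow> real^'d^'d \<Rightarrow> real^'d^'d" where
  "ric_expr g SS SX SSX B Th A =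
     ((1 - g) / g) *\<^sub>R (transpose B ** matrix_inv SS ** B)
     + A ** (SX + ((1 - g) / g) *\<^sub>R (transpose SSX ** matrix_inv SS ** SSX)) ** A
     + A ** (((1 - g) / g) *\<^sub>R (transpose SSX ** matrix_inv SS ** B) - Th)
     + transpose (((1 - g) / g) *\<^sub>R (transpose SSX ** matrix_inv SS ** B) - Th) ** A"

definition lin_expr :: "real \<Rightarrow> real \<Rightarrow> real^'n^'n \<Rightarrow> real^'d^'d \<Rightarrow> real^'d^'n \<Rightarrow> real^'d^'n
                        \<Rightarrow> real^'n \<Rightarrow> real^'d^'d \<Rightarrow> real^'d \<Rightarrow> real^'d^'d \<Rightarrow> real^'d \<Rightarrow> real^'d" where
  "lin_expr g rf SS SX SSX B a Th m A b =
     ((1 - g) / g) *\<^sub>R ((transpose B + A ** transpose SSX) ** matrix_inv SS)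
         *v (SSX *v b + a - rf *\<^sub>R vec 1)
     + (A ** SX - transpose Th) *v b
     + (A ** Th) *v m"

end

theory Submission
  imports Defs
begin

lemma mm_add_l: "((A::real^'m^'n) + B) ** C = A ** C + B ** C"
  by (simp add: matrix_matrix_mult_def vec_eq_iff sum.distrib distrib_right)
lemma mm_add_r: "(A::real^'m^'n) ** (B + C) = A ** B + A ** C"
  by (simp add: matrix_add_ldistrib)
lemma mm_diff_l: "((A::real^'m^'n) - B) ** C = A ** C - B ** C"
  by (simp add: matrix_matrix_mult_def vec_eq_iff sum_subtractf left_diff_distrib)
lemma mm_diff_r: "(A::real^'m^'n) ** (B - C) = A ** B - A ** C"
  by (simp add: matrix_matrix_mult_def vec_eq_iff sum_subtractf right_diff_distrib)
lemma mm_neg_l: "(- (A::real^'m^'n)) ** C = - (A ** C)"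
  by (simp add: matrix_matrix_mult_def vec_eq_iff sum_negf)
lemma mm_neg_r: "(A::real^'m^'n) ** (- C) = - (A ** C)"
  by (simp add: matrix_matrix_mult_def vec_eq_iff sum_negf)
lemma mm_scale_l: "(c *\<^sub>R (A::real^'m^'n)) ** C = c *\<^sub>R (A ** C)"
  by (simp add: matrix_matrix_mult_def vec_eq_iff sum_distrib_left mult.assoc)
lemma mm_scale_r: "(A::real^'m^'n) ** (c *\<^sub>R C) = c *\<^sub>R (A ** C)"
  by (simp add: matrix_matrix_mult_def vec_eq_iff sum_distrib_left algebra_simps)
lemma mm_zero_l: "(0::real^'m^'n) ** C = 0"
  by (simp add: matrix_matrix_mult_def vec_eq_iff)
lemma mm_zero_r: "(A::real^'m^'n) ** (0::real^'p^'m) = 0"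
  by (simp add: matrix_matrix_mult_def vec_eq_iff)
lemma tr_add: "transpose ((A::real^'m^'n) + B) = transpose A + transpose B"
  by (simp add: transpose_def vec_eq_iff)
lemma tr_diff: "transpose ((A::real^'m^'n) - B) = transpose A - transpose B"
  by (simp add: transpose_def vec_eq_iff)
lemma tr_neg: "transpose (- (A::real^'m^'n)) = - transpose A"
  by (simp add: transpose_def vec_eq_iff)
lemma tr_zero: "transpose (0::real^'m^'n) = 0"
  by (simp add: transpose_def vec_eq_iff)
lemma mv_scale_l: "(c *\<^sub>R (A::real^'m^'n)) *v x = c *\<^sub>R (A *v x)"
  by (simp add: matrix_vector_mult_def vec_eq_iff sum_distrib_left mult.assoc)
lemma mv_neg_l: "(- (A::real^'m^'n)) *v x = - (A *v x)"
  by (simp add: matrix_vector_mult_def vec_eq_iff sum_negf)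

lemmas mm_simps = mm_add_l mm_add_r mm_diff_l mm_diff_r mm_neg_l mm_neg_r mm_scale_l mm_scale_r
  mm_zero_l mm_zero_r tr_add tr_diff tr_neg tr_zero transpose_scalar matrix_transpose_mul
  transpose_transpose matrix_mul_assoc[symmetric]

lemma norm_mm_le: "norm ((A::real^'m^'n) ** B) \<le> norm A * norm B * real (CARD('m) * CARD('n) * CARD('p))"
  for B :: "real^'p^'m"
proof -
  have e: "\<bar>(A ** B) $ i $ j\<bar> \<le> real CARD('m) * (norm A * norm B)" for i j
  proof -
    have "\<bar>(A ** B) $ i $ j\<bar> = \<bar>\<Sum>k\<in>UNIV. A $ i $ k * B $ k $ j\<bar>"
      by (simp add: matrix_matrix_mult_def)
    also have "\<dots> \<le> (\<Sum>k\<in>(UNIV::'m set). \<bar>A $ i $ k * B $ k $ j\<bar>)" by (rule sum_abs)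
    also have "\<dots> \<le> (\<Sum>k\<in>(UNIV::'m set). norm A * norm B)"
    proof (rule sum_mono)
      fix k
      have "\<bar>A $ i $ k\<bar> \<le> norm A"
        using order_trans[OF component_le_norm_cart Finite_Cartesian_Product.norm_nth_le] by blast
      moreover have "\<bar>B $ k $ j\<bar> \<le> norm B"
        using order_trans[OF component_le_norm_cart Finite_Cartesian_Product.norm_nth_le] by blast
      ultimately show "\<bar>A $ i $ k * B $ k $ j\<bar> \<le> norm A * norm B"
        by (simp add: abs_mult mult_mono')
    qed
    finally show ?thesis by simp
  qed
  have r: "norm ((A ** B) $ i) \<le> real CARD('p) * (real CARD('m) * (norm A * norm B))" for i
  proof -
    have "norm ((A ** B) $ i) \<le> (\<Sum>j\<in>UNIV. \<bar>(A ** B) $ i $ j\<bar>)" by (rule norm_le_l1_cart)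
    also have "\<dots> \<le> (\<Sum>j\<in>(UNIV::'p set). real CARD('m) * (norm A * norm B))"
      by (rule sum_mono) (rule e)
    finally show ?thesis by simp
  qed
  have "norm (A ** B) \<le> (\<Sum>i\<in>UNIV. \<bar>norm ((A ** B) $ i)\<bar>)"
    unfolding norm_vec_def by (simp add: L2_set_le_sum)
  also have "\<dots> \<le> (\<Sum>i\<in>(UNIV::'n set). real CARD('p) * (real CARD('m) * (norm A * norm B)))"
    by (rule sum_mono) (use r in auto)
  finally show ?thesis by (simp add: algebra_simps)
qed

lemma bb_mm: "bounded_bilinear (\<lambda>(A::real^'m^'n) (B::real^'p^'m). A ** B)"
proof
  fix a a' :: "real^'m^'n" and b b' :: "real^'p^'m" and r :: real
  show "(a + a') ** b = a ** b + a' ** b" by (rule mm_add_l)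
  show "a ** (b + b') = a ** b + a ** b'" by (rule mm_add_r)
  show "(r *\<^sub>R a) ** b = r *\<^sub>R (a ** b)" by (rule mm_scale_l)
  show "a ** (r *\<^sub>R b) = r *\<^sub>R (a ** b)" by (rule mm_scale_r)
next
  show "\<exists>K. \<forall>a b. norm ((a::real^'m^'n) ** (b::real^'p^'m)) \<le> norm a * norm b * K"
    using norm_mm_le by blast
qed

lemma norm_mv_le: "norm ((A::real^'m^'n) *v x) \<le> norm A * norm x"
proof -
  have "norm (A *v x) ^ 2 = (\<Sum>i\<in>UNIV. ((A *v x) $ i)^2)"
    by (simp add: norm_vec_def L2_set_def real_sqrt_pow2 sum_nonneg)
  also have "\<dots> \<le> (\<Sum>i\<in>UNIV. (norm (A $ i) * norm x)^2)"
  proof (rule sum_mono)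
    fix i
    have "\<bar>(A *v x) $ i\<bar> \<le> norm (A $ i) * norm x"
      by (simp add: matrix_vector_mul_component Cauchy_Schwarz_ineq2)
    then show "((A *v x) $ i)^2 \<le> (norm (A $ i) * norm x)^2"
      by (metis abs_le_square_iff abs_mult abs_norm_cancel)
  qed
  also have "\<dots> = (\<Sum>i\<in>UNIV. (norm (A $ i))^2) * (norm x)^2"
    by (simp add: power_mult_distrib sum_distrib_right)
  also have "(\<Sum>i\<in>UNIV. (norm (A $ i))^2) = (norm A)^2"
    by (simp add: norm_vec_def L2_set_def real_sqrt_pow2 sum_nonneg)
  finally have "norm (A *v x) ^ 2 \<le> (norm A * norm x)^2" by (simp add: power_mult_distrib)
  then show ?thesis by (simp add: power2_le_iff_abs_le)
qed

lemma bb_mv: "bounded_bilinear (\<lambda>(A::real^'m^'n) (x::real^'m). A *v x)"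
proof
  fix a a' :: "real^'m^'n" and b b' :: "real^'m" and r :: real
  show "(a + a') *v b = a *v b + a' *v b" by (rule matrix_vector_mult_add_rdistrib)
  show "a *v (b + b') = a *v b + a *v b'" by (rule matrix_vector_right_distrib)
  show "(r *\<^sub>R a) *v b = r *\<^sub>R (a *v b)" by (rule mv_scale_l)
  show "a *v (r *\<^sub>R b) = r *\<^sub>R (a *v b)" by (rule matrix_vector_mult_scaleR)
next
  show "\<exists>K. \<forall>a b. norm ((a::real^'m^'n) *v (b::real^'m)) \<le> norm a * norm b * K"
    using norm_mv_le by (metis mult.right_neutral)
qed

lemma bl_tr: "bounded_linear (transpose :: real^'m^'n \<Rightarrow> real^'n^'m)"
proof -
  have "norm (transpose A) = norm A" for A :: "real^'m^'n"
  proof -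
    have "norm (transpose A) ^2 = (\<Sum>i\<in>UNIV. \<Sum>j\<in>UNIV. (A $ j $ i)^2)"
      by (simp add: norm_vec_def L2_set_def real_sqrt_pow2 sum_nonneg transpose_def)
    also have "\<dots> = (\<Sum>j\<in>UNIV. \<Sum>i\<in>UNIV. (A $ j $ i)^2)" by (rule sum.swap)
    also have "\<dots> = norm A ^ 2"
      by (simp add: norm_vec_def L2_set_def real_sqrt_pow2 sum_nonneg)
    finally show ?thesis by (simp add: power2_eq_iff_nonneg)
  qed
  then show ?thesis
    by (intro bounded_linear_intro[where K=1]) (auto simp: tr_add transpose_scalar)
qed

lemma vec_sum_axis: "(x::'a::real_normed_vector^'n) = (\<Sum>i\<in>UNIV. axis i (x $ i))"
  by (simp add: vec_eq_iff axis_def sum.delta' if_distrib[of "\<lambda>v. v $ _"] cong: if_cong)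

lemma bl_axis: "bounded_linear (axis i :: 'a::real_normed_vector \<Rightarrow> 'a^'n)"
proof (rule bounded_linear_intro[where K=1])
  show "axis i (x + y) = axis i x + axis i y" for x y :: 'a by (simp add: vec_eq_iff axis_def)
  show "axis i (r *\<^sub>R x) = r *\<^sub>R axis i x" for r and x :: 'a by (simp add: vec_eq_iff axis_def)
  show "norm (axis i x :: 'a^'n) \<le> norm x * 1" for x :: 'a
  proof -
    have "(\<Sum>j\<in>UNIV. (norm ((axis i x :: 'a^'n) $ j))\<^sup>2) = (\<Sum>j\<in>UNIV. if j = i then (norm x)\<^sup>2 else 0)"
      by (rule sum.cong) (auto simp: axis_def)
    then show ?thesis by (simp add: norm_vec_def L2_set_def)
  qed
qed

lemma vec_has_vector_derivative:
  fixes f :: "real \<Rightarrow> 'a::real_normed_vector^'n"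
  assumes "\<And>i. ((\<lambda>t. f t $ i) has_vector_derivative f' $ i) F"
  shows "(f has_vector_derivative f') F"
proof -
  have "((\<lambda>t. \<Sum>i\<in>UNIV. axis i (f t $ i)) has_vector_derivative (\<Sum>i\<in>UNIV. axis i (f' $ i))) F"
    by (intro has_vector_derivative_sum bounded_linear.has_vector_derivative[OF bl_axis] assms)
  then show ?thesis by (simp flip: vec_sum_axis)
qed

lemma bl_entry: "bounded_linear (\<lambda>X::'a::real_normed_vector^'n^'m. X $ i $ j)"
proof -
  have "bounded_linear (\<lambda>X::'a^'n^'m. X $ i)" by (rule bounded_linear_vec_nth)
  from bounded_linear_compose[OF bounded_linear_vec_nth this] show ?thesis .
qed

lemma aux_div: "(f::real) > 0 \<Longrightarrow> (n::real) \<ge> 0 \<Longrightarrow> (f * a + f * (n * a)) / (f + f * n) = a"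
proof -
  assume "f > 0" "n \<ge> 0"
  then have "f + f * n > 0" by (simp add: add_pos_nonneg)
  moreover have "f * a + f * (n * a) = (f + f * n) * a" by (simp add: algebra_simps)
  ultimately show ?thesis by simp
qed

lemma mpow_scale: "mpow (s *\<^sub>R M) k = (s ^ k) *\<^sub>R mpow M k"
  by (induct k) (simp_all add: mm_scale_l mm_scale_r)

lemma mpow_comm: "M ** mpow M k = mpow M k ** M"
  by (induct k) (simp_all add: matrix_mul_assoc)

lemma mpow_tr: "transpose (mpow M k) = mpow (transpose M) k"
  by (induct k) (simp_all add: matrix_transpose_mul mpow_comm)

lemma norm_mpow: "norm (mpow (M::real^'n^'n) k) \<le> norm (mat 1 :: real^'n^'n) * (norm M * real (CARD('n)^3)) ^ k"
proof (induct k)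
  case 0 then show ?case by simp
next
  case (Suc k)
  have "norm (mpow M (Suc k)) \<le> norm M * norm (mpow M k) * real (CARD('n)^3)"
    using norm_mm_le[of M "mpow M k"] by (simp add: power3_eq_cube mult.assoc)
  also have "\<dots> \<le> norm M * (norm (mat 1 :: real^'n^'n) * (norm M * real (CARD('n)^3)) ^ k) * real (CARD('n)^3)"
    by (intro mult_right_mono mult_left_mono Suc) auto
  finally show ?case by (simp add: algebra_simps)
qed

lemma mexp_summable: "summable (\<lambda>k. (1 / fact k :: real) *\<^sub>R mpow (M::real^'n^'n) k)"
proof (rule summable_norm_cancel, rule summable_comparison_test)
  let ?c = "norm M * real (CARD('n)^3)"
  show "\<exists>N. \<forall>k\<ge>N. norm (norm ((1 / fact k :: real) *\<^sub>R mpow M k)) \<le> norm (mat 1 :: real^'n^'n) * (inverse (fact k) * ?c ^ k)"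
    using norm_mpow[of M] by (auto intro!: exI[of _ 0] simp: field_simps divide_right_mono)
  show "summable (\<lambda>k. norm (mat 1 :: real^'n^'n) * (inverse (fact k) * ?c ^ k))"
    by (intro summable_mult summable_exp)
qed

lemma mexp_scale: "mexp (s *\<^sub>R M) = (\<Sum>k. (s ^ k / fact k) *\<^sub>R mpow M k)"
  by (simp add: mexp_def mpow_scale)

lemma mexp_scale_summable: "summable (\<lambda>k. (s ^ k / fact k) *\<^sub>R mpow (M::real^'n^'n) k)"
  using mexp_summable[of "s *\<^sub>R M"] by (simp add: mpow_scale)

lemma mexp_zero: "mexp (0::real^'n^'n) = mat 1"
proof -
  have "mexp (0::real^'n^'n) = (\<Sum>k. (0 ^ k / fact k) *\<^sub>R mpow (0::real^'n^'n) k)"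
    using mexp_scale[of 0 "0::real^'n^'n"] by simp
  also have "\<dots> = (\<Sum>k. if k = 0 then mat 1 else 0)"
    by (intro suminf_cong) auto
  also have "\<dots> = mat 1"
    using suminf_finite[of "{0}" "\<lambda>k. if k = 0 then (mat 1::real^'n^'n) else 0"] by simp
  finally show ?thesis .
qed

lemma mexp_comm: "M ** mexp (s *\<^sub>R M) = mexp (s *\<^sub>R M) ** M"
proof -
  have "M ** mexp (s *\<^sub>R M) = (\<Sum>k. M ** ((s ^ k / fact k) *\<^sub>R mpow M k))"
    unfolding mexp_scale
    by (rule bounded_linear.suminf[OF bounded_bilinear.bounded_linear_right[OF bb_mm] mexp_scale_summable])
  also have "\<dots> = (\<Sum>k. ((s ^ k / fact k) *\<^sub>R mpow M k) ** M)"
    by (simp add: mm_scale_l mm_scale_r mpow_comm)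
  also have "\<dots> = mexp (s *\<^sub>R M) ** M"
    unfolding mexp_scale
    by (rule bounded_linear.suminf[OF bounded_bilinear.bounded_linear_left[OF bb_mm] mexp_scale_summable, symmetric])
  finally show ?thesis .
qed

lemma mexp_tr: "transpose (mexp (s *\<^sub>R M)) = mexp (s *\<^sub>R transpose M)"
proof -
  have "transpose (mexp (s *\<^sub>R M)) = (\<Sum>k. transpose ((s ^ k / fact k) *\<^sub>R mpow M k))"
    unfolding mexp_scale by (rule bounded_linear.suminf[OF bl_tr mexp_scale_summable])
  also have "\<dots> = mexp (s *\<^sub>R transpose M)"
    unfolding mexp_scale by (simp add: transpose_scalar mpow_tr)
  finally show ?thesis .
qed

lemma mexp_entry: fixes M :: "real^'n^'n" shows "mexp (s *\<^sub>R M) $ i $ j = (\<Sum>k. (mpow M k $ i $ j / fact k) * s ^ k)"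
proof -
  have bl: "bounded_linear (\<lambda>X::real^'n^'n. X $ i $ j)" by (rule bl_entry)
  show ?thesis
    unfolding mexp_scale bounded_linear.suminf[OF bl mexp_scale_summable]
    by (simp add: field_simps)
qed

lemma mexp_deriv0: fixes M :: "real^'n^'n" shows "((\<lambda>s. mexp (s *\<^sub>R M)) has_vector_derivative M ** mexp (s *\<^sub>R M)) (at s)"
proof (rule vec_has_vector_derivative, rule vec_has_vector_derivative)
  fix i j
  let ?c = "\<lambda>k. mpow M k $ i $ j / fact k"
  have bl: "bounded_linear (\<lambda>X::real^'n^'n. X $ i $ j)" by (rule bl_entry)
  have sm: "summable (\<lambda>k. ?c k * y ^ k)" for y
  proof -
    have "summable (\<lambda>k. ((y ^ k / fact k) *\<^sub>R mpow M k) $ i $ j)"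
      by (rule bounded_linear.summable[OF bl mexp_scale_summable])
    then show ?thesis by (simp add: field_simps)
  qed
  have d: "((\<lambda>s. \<Sum>k. ?c k * s ^ k) has_field_derivative (\<Sum>k. diffs ?c k * s ^ k)) (at s)"
    by (rule termdiffs_strong_converges_everywhere[OF sm])
  have sm2: "summable (\<lambda>k. M ** ((s ^ k / fact k) *\<^sub>R mpow M k))"
    by (rule bounded_linear.summable[OF bounded_bilinear.bounded_linear_right[OF bb_mm] mexp_scale_summable])
  have "M ** mexp (s *\<^sub>R M) = (\<Sum>k. M ** ((s ^ k / fact k) *\<^sub>R mpow M k))"
    unfolding mexp_scale
    by (rule bounded_linear.suminf[OF bounded_bilinear.bounded_linear_right[OF bb_mm] mexp_scale_summable])
  then have "(M ** mexp (s *\<^sub>R M)) $ i $ j = (\<Sum>k. (M ** ((s ^ k / fact k) *\<^sub>R mpow M k)) $ i $ j)"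
    using bounded_linear.suminf[OF bl sm2] by simp
  also have "\<dots> = (\<Sum>k. diffs ?c k * s ^ k)"
  proof (intro suminf_cong)
    fix n
    have "(fact (Suc n) :: real) = real (Suc n) * fact n" by simp
    moreover have "(fact n :: real) > 0" by simp
    ultimately show "(M ** ((s ^ n / fact n) *\<^sub>R mpow M n)) $ i $ j = diffs ?c n * s ^ n"
      unfolding diffs_def by (simp only: mpow.simps mm_scale_r) (simp add: field_simps aux_div)
  qed
  finally have e: "(\<Sum>k. diffs ?c k * s ^ k) = (M ** mexp (s *\<^sub>R M)) $ i $ j" by simp
  show "((\<lambda>t. mexp (t *\<^sub>R M) $ i $ j) has_vector_derivative (M ** mexp (s *\<^sub>R M)) $ i $ j) (at s)"
    using d unfolding e[symmetric] mexp_entry has_real_derivative_iff_has_vector_derivative .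
qed

lemma poly_integral:
  assumes "a \<le> t"
  shows "((\<lambda>s. (s - a) ^ m) has_integral (t - a) ^ Suc m / real (Suc m)) {a..t}"
proof -
  have "((\<lambda>s. (s - a) ^ m) has_integral ((\<lambda>s. (s - a) ^ Suc m / real (Suc m)) t - (\<lambda>s. (s - a) ^ Suc m / real (Suc m)) a)) {a..t}"
  proof (rule fundamental_theorem_of_calculus[OF assms])
    fix x assume "x \<in> {a..t}"
    have d0: "((\<lambda>s. s - a) has_real_derivative 1) (at x within {a..t})"
      by (auto intro!: derivative_eq_intros)
    have d: "((\<lambda>s. (s - a) ^ Suc m) has_real_derivative real (Suc m) * (x - a) ^ m) (at x within {a..t})"
      using DERIV_power_Suc[OF d0, of m] by simp
    have "((\<lambda>s. (s - a) ^ Suc m / real (Suc m)) has_real_derivative (x - a) ^ m) (at x within {a..t})"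
      using DERIV_cdivide[OF d, of "real (Suc m)"] by simp
    then show "((\<lambda>s. (s - a) ^ Suc m / real (Suc m)) has_vector_derivative (x - a) ^ m) (at x within {a..t})"
      by (simp add: has_real_derivative_iff_has_vector_derivative)
  qed
  then show ?thesis by simp
qed

lemma lin_ode_exists:
  fixes F :: "real \<Rightarrow> real^'n^'n" and v :: "real^'n"
  assumes cF: "continuous_on {a..b} F" and ab: "a \<le> b"
  shows "\<exists>x. x a = v \<and> (\<forall>t\<in>{a..b}. (x has_vector_derivative F t *v x t) (at t within {a..b}))"
proof -
  obtain L where L0: "L \<ge> 0" and L: "\<And>t. t \<in> {a..b} \<Longrightarrow> norm (F t) \<le> L"
    using continuous_on_compact_bound[OF compact_Icc cF] by blast
  have FL: "norm (F t *v z) \<le> L * norm z" if "t \<in> {a..b}" for t z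
    using norm_mv_le[of "F t" z] L[OF that] by (meson mult_right_mono norm_ge_zero order_trans)
  define xs where "xs = rec_nat (\<lambda>t. v) (\<lambda>n f t. v + integral {a..t} (\<lambda>s. F s *v f s))"
  have xs0: "xs 0 = (\<lambda>t. v)" by (simp add: xs_def)
  have xsS: "xs (Suc n) = (\<lambda>t. v + integral {a..t} (\<lambda>s. F s *v xs n s))" for n by (simp add: xs_def)
  have cont: "continuous_on {a..b} (xs n)" for n
  proof (induct n)
    case 0 show ?case by (simp add: xs0)
  next
    case (Suc n)
    have "continuous_on {a..b} (\<lambda>s. F s *v xs n s)"
      by (rule bounded_bilinear.continuous_on[OF bb_mv cF Suc])
    then have "(\<lambda>s. F s *v xs n s) integrable_on {a..b}" by (rule integrable_continuous_interval)
    then show ?case unfolding xsS by (intro continuous_on_add continuous_on_const indefinite_integral_continuous_1)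
  qed
  have cont2: "continuous_on {a..b} (\<lambda>s. F s *v xs n s)" for n
    by (rule bounded_bilinear.continuous_on[OF bb_mv cF cont])
  have intg: "(\<lambda>s. F s *v xs n s) integrable_on {a..t}" if "t \<in> {a..b}" for n t
    using that by (intro integrable_continuous_interval continuous_on_subset[OF cont2]) auto
  have bound: "norm (xs (Suc n) t - xs n t) \<le> norm v * (L * (t - a)) ^ Suc n / fact (Suc n)"
    if "t \<in> {a..b}" for n t
    using that
  proof (induct n arbitrary: t)
    case 0
    have "norm (xs (Suc 0) t - xs 0 t) = norm (integral {a..t} (\<lambda>s. F s *v v))"
      by (simp add: xsS xs0)
    also have "\<dots> \<le> integral {a..t} (\<lambda>s. L * norm v)"
      using 0 intg[OF 0, of 0] by (intro integral_norm_bound_integral) (auto simp: xs0 intro!: FL)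
    also have "\<dots> = norm v * (L * (t - a)) ^ Suc 0 / fact (Suc 0)"
      using 0 by (simp add: algebra_simps)
    finally show ?case .
  next
    case (Suc n)
    let ?C = "norm v * L ^ Suc (Suc n) / fact (Suc n)"
    have "xs (Suc (Suc n)) t - xs (Suc n) t = integral {a..t} (\<lambda>s. F s *v xs (Suc n) s) - integral {a..t} (\<lambda>s. F s *v xs n s)"
      by (simp add: xsS[of "Suc n"] xsS[of n])
    also have "\<dots> = integral {a..t} (\<lambda>s. F s *v (xs (Suc n) s - xs n s))"
      using intg[OF Suc.prems] by (simp add: integral_diff matrix_vector_mult_diff_distrib)
    finally have eq: "xs (Suc (Suc n)) t - xs (Suc n) t = integral {a..t} (\<lambda>s. F s *v (xs (Suc n) s - xs n s))" .
    have pi: "((\<lambda>s. ?C * (s - a) ^ Suc n) has_integral ?C * ((t - a) ^ Suc (Suc n) / real (Suc (Suc n)))) {a..t}"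
      using Suc.prems by (intro has_integral_mult_right poly_integral) auto
    have "norm (xs (Suc (Suc n)) t - xs (Suc n) t) \<le> integral {a..t} (\<lambda>s. ?C * (s - a) ^ Suc n)"
      unfolding eq
    proof (rule integral_norm_bound_integral)
      show "(\<lambda>s. F s *v (xs (Suc n) s - xs n s)) integrable_on {a..t}"
        using intg[OF Suc.prems] by (simp add: matrix_vector_mult_diff_distrib integrable_diff)
      show "(\<lambda>s. ?C * (s - a) ^ Suc n) integrable_on {a..t}" using pi by blast
      fix s assume s: "s \<in> {a..t}"
      then have sab: "s \<in> {a..b}" using Suc.prems by auto
      have "norm (F s *v (xs (Suc n) s - xs n s)) \<le> L * norm (xs (Suc n) s - xs n s)"
        by (rule FL[OF sab])
      also have "\<dots> \<le> L * (norm v * (L * (s - a)) ^ Suc n / fact (Suc n))"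
        by (intro mult_left_mono Suc.hyps sab L0)
      also have "\<dots> = ?C * (s - a) ^ Suc n"
        by (simp add: power_mult_distrib)
      finally show "norm (F s *v (xs (Suc n) s - xs n s)) \<le> ?C * (s - a) ^ Suc n" .
    qed
    also have "\<dots> = ?C * ((t - a) ^ Suc (Suc n) / real (Suc (Suc n)))"
      using pi by (rule integral_unique)
    also have "\<dots> = norm v * (L * (t - a)) ^ Suc (Suc n) / fact (Suc (Suc n))"
    proof -
      have f: "(fact (Suc (Suc n)) :: real) = real (Suc (Suc n)) * fact (Suc n)" by simp
      show ?thesis unfolding f power_mult_distrib[of L "t - a"] by (simp add: ac_simps)
    qed
    finally show ?case .
  qed
  define Mb where "Mb i = norm v * (L * (b - a)) ^ Suc i / fact (Suc i)" for i
  have Mb: "norm (xs (Suc i) t - xs i t) \<le> Mb i" if "t \<in> {a..b}" for i t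
  proof -
    have "(L * (t - a)) ^ Suc i \<le> (L * (b - a)) ^ Suc i"
      using that L0 by (intro power_mono mult_left_mono) auto
    then have "norm v * (L * (t - a)) ^ Suc i / fact (Suc i) \<le> Mb i"
      unfolding Mb_def by (intro divide_right_mono mult_left_mono) auto
    with bound[OF that, of i] show ?thesis by linarith
  qed
  have "summable (\<lambda>i. inverse (fact (i + 1)) * (L * (b - a)) ^ (i + 1))"
    by (rule summable_ignore_initial_segment[OF summable_exp])
  then have "summable (\<lambda>i. norm v * (inverse (fact (i + 1)) * (L * (b - a)) ^ (i + 1)))"
    by (rule summable_mult)
  then have sMb: "summable Mb"
    unfolding Mb_def by (simp add: divide_inverse ac_simps)
  have ul0: "uniform_limit {a..b} (\<lambda>n t. \<Sum>i<n. xs (Suc i) t - xs i t) (\<lambda>t. \<Sum>i. xs (Suc i) t - xs i t) sequentially"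
    by (rule Weierstrass_m_test[OF Mb sMb])
  define X where "X t = v + (\<Sum>i. xs (Suc i) t - xs i t)" for t
  have tel: "(\<Sum>i<n. xs (Suc i) t - xs i t) = xs n t - v" for n t
    using sum_lessThan_telescope[of "\<lambda>i. xs i t" n] by (simp add: xs0)
  have ul: "uniform_limit {a..b} xs X sequentially"
    unfolding uniform_limit_iff
  proof (intro allI impI)
    fix e :: real assume "e > 0"
    then have "\<forall>\<^sub>F n in sequentially. \<forall>t\<in>{a..b}. dist (\<Sum>i<n. xs (Suc i) t - xs i t) (\<Sum>i. xs (Suc i) t - xs i t) < e"
      using ul0 unfolding uniform_limit_iff by blast
    then show "\<forall>\<^sub>F n in sequentially. \<forall>t\<in>{a..b}. dist (xs n t) (X t) < e"
      by eventually_elim (simp add: tel X_def dist_norm algebra_simps)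
  qed
  have contX: "continuous_on {a..b} X"
    by (rule uniform_limit_theorem[OF _ ul]) (auto simp: cont)
  have contFX: "continuous_on {a..b} (\<lambda>s. F s *v X s)"
    by (rule bounded_bilinear.continuous_on[OF bb_mv cF contX])
  have ulF: "uniform_limit {a..b} (\<lambda>n s. F s *v xs n s) (\<lambda>s. F s *v X s) sequentially"
    unfolding uniform_limit_iff
  proof (intro allI impI)
    fix e :: real assume "e > 0"
    then have "e / (L + 1) > 0" using L0 by simp
    then have "\<forall>\<^sub>F n in sequentially. \<forall>t\<in>{a..b}. dist (xs n t) (X t) < e / (L + 1)"
      using ul unfolding uniform_limit_iff by blast
    then show "\<forall>\<^sub>F n in sequentially. \<forall>t\<in>{a..b}. dist (F t *v xs n t) (F t *v X t) < e"
    proof eventually_elim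
      case (elim n)
      show ?case
      proof
        fix t assume t: "t \<in> {a..b}"
        have "dist (F t *v xs n t) (F t *v X t) = norm (F t *v (xs n t - X t))"
          by (simp add: dist_norm matrix_vector_mult_diff_distrib)
        also have "\<dots> \<le> L * norm (xs n t - X t)" by (rule FL[OF t])
        also have "\<dots> \<le> L * (e / (L + 1))"
        proof (rule mult_left_mono[OF _ L0])
          have "dist (xs n t) (X t) < e / (L + 1)" using elim t by blast
          then show "norm (xs n t - X t) \<le> e / (L + 1)" by (simp add: dist_norm)
        qed
        also have "\<dots> < e" using \<open>e > 0\<close> L0 by (simp add: field_simps)
        finally show "dist (F t *v xs n t) (F t *v X t) < e" .
      qed
    qed
  qed
  have Xeq: "X t = v + integral {a..t} (\<lambda>s. F s *v X s)" if t: "t \<in> {a..b}" for t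
  proof -
    have ult: "uniform_limit {a..t} (\<lambda>n s. F s *v xs n s) (\<lambda>s. F s *v X s) sequentially"
      by (rule uniform_limit_on_subset[OF ulF]) (use t in auto)
    obtain I J where I: "\<And>n. ((\<lambda>s. F s *v xs n s) has_integral I n) {a..t}"
      and J: "((\<lambda>s. F s *v X s) has_integral J) {a..t}" and IJ: "I \<longlonglongrightarrow> J"
      by (rule uniform_limit_integral[OF ult]) (use t in \<open>auto intro: continuous_on_subset[OF cont2]\<close>)
    have "(\<lambda>n. xs (Suc n) t) \<longlonglongrightarrow> v + J"
    proof -
      have "integral {a..t} (\<lambda>s. F s *v xs n s) = I n" for n using I[of n] by (rule integral_unique)
      then show ?thesis unfolding xsS using tendsto_add[OF tendsto_const IJ, of v] by simp
    qed
    moreover have "(\<lambda>n. xs (Suc n) t) \<longlonglongrightarrow> X t"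
      using tendsto_uniform_limitI[OF ul t] by (rule LIMSEQ_Suc)
    ultimately have "X t = v + J" using LIMSEQ_unique by blast
    then show ?thesis using J by (simp add: integral_unique)
  qed
  show ?thesis
  proof (intro exI conjI ballI)
    show "X a = v" using Xeq[of a] ab by simp
    fix t assume t: "t \<in> {a..b}"
    show "(X has_vector_derivative F t *v X t) (at t within {a..b})"
      by (rule has_vector_derivative_transform[OF t Xeq])
         (auto intro!: derivative_eq_intros integral_has_vector_derivative[OF contFX t])
  qed
qed

lemma decr_within:
  fixes f :: "real \<Rightarrow> real"
  assumes ab: "a \<le> b" and d: "\<And>x. x \<in> {a..b} \<Longrightarrow> (f has_real_derivative d x) (at x within {a..b})"
    and le: "\<And>x. x \<in> {a..b} \<Longrightarrow> d x \<le> 0"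
  shows "f b \<le> f a"
proof -
  have "\<exists>x\<in>{a..b}. f b - f a = (\<lambda>h. h * d x) (b - a)"
    by (rule mvt_very_simple[OF ab]) (use d in \<open>auto simp: has_field_derivative_def mult_commute_abs\<close>)
  then obtain x where x: "x \<in> {a..b}" "f b - f a = (b - a) * d x" by auto
  have "(b - a) * d x \<le> 0" using le[OF x(1)] ab by (simp add: mult_nonneg_nonpos)
  with x show ?thesis by simp
qed

lemma inner_tr: "(transpose A *v y) \<bullet> z = y \<bullet> ((A::real^'n^'m) *v z)"
  by (simp add: dot_lmul_matrix)

lemma matrix_zeroI: "(\<And>u v. u \<bullet> ((X::real^'n^'m) *v v) = 0) \<Longrightarrow> X = 0"
proof -
  assume h: "\<And>u v. u \<bullet> (X *v v) = 0"
  have "X *v v = 0 *v v" for v using h[of "X *v v" v] by simp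
  then show "X = 0" by (simp add: matrix_eq)
qed

lemma flow_zero:
  fixes X F1 F2 :: "real \<Rightarrow> real^'n^'n"
  assumes t0: "t0 \<le> T"
    and dX: "\<And>s. s \<in> {t0..T} \<Longrightarrow> (X has_vector_derivative - (X s ** F1 s + F2 s ** X s)) (at s within {t0..T})"
    and c1: "continuous_on {t0..T} F1" and c2: "continuous_on {t0..T} F2"
    and XT: "X T = 0"
  shows "X t0 = 0"
proof (rule matrix_zeroI)
  fix u v :: "real^'n"
  obtain x where x0: "x t0 = v" and dx: "\<And>s. s \<in> {t0..T} \<Longrightarrow> (x has_vector_derivative F1 s *v x s) (at s within {t0..T})"
    using lin_ode_exists[OF c1 t0, of v] by blast
  have c2t: "continuous_on {t0..T} (\<lambda>s. transpose (F2 s))"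
    by (rule bounded_linear.continuous_on[OF bl_tr c2])
  obtain y where y0: "y t0 = u" and dy: "\<And>s. s \<in> {t0..T} \<Longrightarrow> (y has_vector_derivative transpose (F2 s) *v y s) (at s within {t0..T})"
    using lin_ode_exists[OF c2t t0, of u] by blast
  define w where "w s = y s \<bullet> (X s *v x s)" for s
  have dw: "(w has_derivative (\<lambda>h. 0)) (at s within {t0..T})" if s: "s \<in> {t0..T}" for s
  proof -
    have d1: "((\<lambda>s. X s *v x s) has_vector_derivative X s *v (F1 s *v x s) + (- (X s ** F1 s + F2 s ** X s)) *v x s) (at s within {t0..T})"
      by (rule bounded_bilinear.has_vector_derivative[OF bb_mv dX[OF s] dx[OF s]])
    have d2: "(w has_vector_derivative y s \<bullet> (X s *v (F1 s *v x s) + (- (X s ** F1 s + F2 s ** X s)) *v x s) + (transpose (F2 s) *v y s) \<bullet> (X s *v x s)) (at s within {t0..T})"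
      unfolding w_def by (rule bounded_bilinear.has_vector_derivative[OF bounded_bilinear_inner dy[OF s] d1])
    have e: "(transpose (F2 s) *v y s) \<bullet> (X s *v x s) = y s \<bullet> (F2 s *v (X s *v x s))"
      by (rule inner_tr)
    have "y s \<bullet> (X s *v (F1 s *v x s) + (- (X s ** F1 s + F2 s ** X s)) *v x s) + (transpose (F2 s) *v y s) \<bullet> (X s *v x s) = 0"
      unfolding e by (simp add: matrix_vector_mult_diff_rdistrib matrix_vector_mult_add_rdistrib mv_neg_l matrix_vector_mul_assoc inner_add_right inner_minus_right)
    with d2 show ?thesis by (simp add: has_vector_derivative_def)
  qed
  obtain c where "\<forall>s\<in>{t0..T}. w s = c"
    using has_derivative_zero_constant[of "{t0..T}" w] dw by auto
  then have "w t0 = w T" using t0 by auto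
  then show "u \<bullet> (X t0 *v v) = 0" by (simp add: w_def x0 y0 XT)
qed

lemma flow_psd:
  fixes X F R :: "real \<Rightarrow> real^'n^'n"
  assumes t0: "t0 \<le> T"
    and dX: "\<And>s. s \<in> {t0..T} \<Longrightarrow> (X has_vector_derivative - (X s ** F s + transpose (F s) ** X s) - R s) (at s within {t0..T})"
    and c: "continuous_on {t0..T} F"
    and R: "\<And>s. s \<in> {t0..T} \<Longrightarrow> psd (R s)"
    and XT: "psd (X T)"
  shows "psd (X t0)"
  unfolding psd_def
proof
  fix v :: "real^'n"
  obtain x where x0: "x t0 = v" and dx: "\<And>s. s \<in> {t0..T} \<Longrightarrow> (x has_vector_derivative F s *v x s) (at s within {t0..T})"
    using lin_ode_exists[OF c t0, of v] by blast
  define w where "w s = x s \<bullet> (X s *v x s)" for s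
  have dw: "(w has_real_derivative - (x s \<bullet> (R s *v x s))) (at s within {t0..T})" if s: "s \<in> {t0..T}" for s
  proof -
    have d1: "((\<lambda>s. X s *v x s) has_vector_derivative X s *v (F s *v x s) + (- (X s ** F s + transpose (F s) ** X s) - R s) *v x s) (at s within {t0..T})"
      by (rule bounded_bilinear.has_vector_derivative[OF bb_mv dX[OF s] dx[OF s]])
    have d2: "(w has_vector_derivative x s \<bullet> (X s *v (F s *v x s) + (- (X s ** F s + transpose (F s) ** X s) - R s) *v x s) + (F s *v x s) \<bullet> (X s *v x s)) (at s within {t0..T})"
      unfolding w_def by (rule bounded_bilinear.has_vector_derivative[OF bounded_bilinear_inner dx[OF s] d1])
    have e: "(F s *v x s) \<bullet> (X s *v x s) = x s \<bullet> (transpose (F s) *v (X s *v x s))"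
      using inner_tr[of "transpose (F s)" "x s" "X s *v x s"] by simp
    have "x s \<bullet> (X s *v (F s *v x s) + (- (X s ** F s + transpose (F s) ** X s) - R s) *v x s) + (F s *v x s) \<bullet> (X s *v x s) = - (x s \<bullet> (R s *v x s))"
      unfolding e
      by (simp add: matrix_vector_mult_add_rdistrib matrix_vector_mult_diff_rdistrib mv_neg_l matrix_vector_mul_assoc inner_add_right inner_diff_right inner_minus_right)
    with d2 show ?thesis by (simp add: has_real_derivative_iff_has_vector_derivative)
  qed
  have "w T \<le> w t0"
    by (rule decr_within[OF t0 dw]) (use R in \<open>auto simp: psd_def\<close>)
  moreover have "w T \<ge> 0" using XT by (simp add: psd_def w_def)
  ultimately show "v \<bullet> (X t0 *v v) \<ge> 0" by (simp add: w_def x0)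
qed

definition ricC :: "real \<Rightarrow> real^'n^'n \<Rightarrow> real^'d^'n \<Rightarrow> real^'d^'d" where "ricC g SS B = ((1 - g) / g) *\<^sub>R (transpose B ** matrix_inv SS ** B)"
definition ricQ :: "real \<Rightarrow> real^'n^'n \<Rightarrow> real^'d^'d \<Rightarrow> real^'d^'n \<Rightarrow> real^'d^'d" where "ricQ g SS SX SSX = SX + ((1 - g) / g) *\<^sub>R (transpose SSX ** matrix_inv SS ** SSX)"
definition ricK :: "real \<Rightarrow> real^'n^'n \<Rightarrow> real^'d^'n \<Rightarrow> real^'d^'n \<Rightarrow> real^'d^'d \<Rightarrow> real^'d^'d" where "ricK g SS SSX B Th = ((1 - g) / g) *\<^sub>R (transpose SSX ** matrix_inv SS ** B) - Th"

lemma ric_alt: "ric_expr g SS SX SSX B Th A =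
   ricC g SS B + A ** ricQ g SS SX SSX ** A + A ** ricK g SS SSX B Th + transpose (ricK g SS SSX B Th) ** A"
  by (simp add: ric_expr_def ricC_def ricQ_def ricK_def)

lemma ricC_sym: "transpose (matrix_inv SS) = matrix_inv SS \<Longrightarrow> transpose (ricC g SS B) = ricC g SS B"
  by (simp add: ricC_def mm_simps)

lemma ricQ_sym: "transpose (matrix_inv SS) = matrix_inv SS \<Longrightarrow> transpose SX = SX \<Longrightarrow>
   transpose (ricQ g SS SX SSX) = ricQ g SS SX SSX"
  by (simp add: ricQ_def mm_simps)

lemma deriv_cont:
  assumes "\<And>t. t \<in> S \<Longrightarrow> (A has_vector_derivative A' t) (at t within S)"
  shows "continuous_on S A"
  using assms continuous_on_eq_continuous_within has_vector_derivative_continuous by blast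

lemma ric_sym:
  fixes A :: "real \<Rightarrow> real^'d^'d"
  assumes Ssym: "transpose (matrix_inv SS) = matrix_inv SS" and SXsym: "transpose SX = SX"
    and dA: "\<forall>t\<in>{0..T}. (A has_vector_derivative - ric_expr g SS SX SSX B Th (A t)) (at t within {0..T})"
    and AT: "transpose (A T) = A T"
    and t: "t \<in> {0..T}"
  shows "transpose (A t) = A t"
proof -
  let ?C = "ricC g SS B" and ?Q = "ricQ g SS SX SSX" and ?K = "ricK g SS SSX B Th"
  have Cs: "transpose ?C = ?C" by (rule ricC_sym[OF Ssym])
  have Qs: "transpose ?Q = ?Q" by (rule ricQ_sym[OF Ssym SXsym])
  have tT: "t \<le> T" using t by auto
  have sub: "{t..T} \<subseteq> {0..T}" using t by auto
  have dA': "(A has_vector_derivative - (?C + A s ** ?Q ** A s + A s ** ?K + transpose ?K ** A s)) (at s within {t..T})"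
    if "s \<in> {t..T}" for s
    using has_vector_derivative_within_subset[OF dA[rule_format, of s] sub] that sub
    unfolding ric_alt by auto
  have cA: "continuous_on {t..T} A" using deriv_cont[OF dA'] .
  define X where "X s = A s - transpose (A s)" for s
  have "X t = 0"
  proof (rule flow_zero[OF tT])
    fix s assume s: "s \<in> {t..T}"
    have "(X has_vector_derivative - (?C + A s ** ?Q ** A s + A s ** ?K + transpose ?K ** A s)
          - transpose (- (?C + A s ** ?Q ** A s + A s ** ?K + transpose ?K ** A s))) (at s within {t..T})"
      unfolding X_def
      by (intro derivative_intros dA'[OF s] bounded_linear.has_vector_derivative[OF bl_tr])
    moreover have "- (?C + A s ** ?Q ** A s + A s ** ?K + transpose ?K ** A s)
          - transpose (- (?C + A s ** ?Q ** A s + A s ** ?K + transpose ?K ** A s))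
       = - (X s ** (?Q ** A s + ?K) + (transpose (A s) ** ?Q + transpose ?K) ** X s)"
      unfolding X_def using Cs Qs by (simp add: mm_simps algebra_simps)
    ultimately show "(X has_vector_derivative - (X s ** (?Q ** A s + ?K) + (transpose (A s) ** ?Q + transpose ?K) ** X s)) (at s within {t..T})"
      by simp
  next
    show "continuous_on {t..T} (\<lambda>s. ?Q ** A s + ?K)"
      by (intro continuous_intros bounded_bilinear.continuous_on[OF bb_mm] cA)
    show "continuous_on {t..T} (\<lambda>s. transpose (A s) ** ?Q + transpose ?K)"
      by (intro continuous_intros bounded_bilinear.continuous_on[OF bb_mm] bounded_linear.continuous_on[OF bl_tr] cA)
    show "X T = 0" using AT by (simp add: X_def)
  qed
  then show ?thesis by (simp add: X_def)
qed

lemma psd_congr: "psd M \<Longrightarrow> psd (transpose P ** M ** (P::real^'d^'k))"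
  unfolding psd_def
proof
  fix v :: "real^'d"
  assume h: "\<forall>v. 0 \<le> v \<bullet> (M *v v)"
  have "v \<bullet> ((transpose P ** M ** P) *v v) = (P *v v) \<bullet> (M *v (P *v v))"
    using inner_tr[of P "M *v (P *v v)" v] by (simp add: matrix_vector_mul_assoc[symmetric] inner_commute)
  then show "0 \<le> v \<bullet> ((transpose P ** M ** P) *v v)" using h by simp
qed

lemma ric_nsd:
  fixes A :: "real \<Rightarrow> real^'d^'d" and P :: "real^'d^'k"
  assumes Ssym: "transpose (matrix_inv SS) = matrix_inv SS" and SXsym: "transpose SX = SX"
    and dA: "\<forall>t\<in>{0..T}. (A has_vector_derivative - ric_expr g SS SX SSX B Th (A t)) (at t within {0..T})"
    and AT: "A T = - (transpose P ** Omi ** P)" and Omis: "transpose Omi = Omi" and Omip: "psd Omi"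
    and Cn: "psd (- ricC g SS B)"
    and t: "t \<in> {0..T}"
  shows "nsd (A t)"
proof -
  let ?C = "ricC g SS B" and ?Q = "ricQ g SS SX SSX" and ?K = "ricK g SS SSX B Th"
  have Qs: "transpose ?Q = ?Q" by (rule ricQ_sym[OF Ssym SXsym])
  have ATs: "transpose (A T) = A T" using Omis by (simp add: AT mm_simps)
  have As: "transpose (A s) = A s" if "s \<in> {0..T}" for s
    by (rule ric_sym[OF Ssym SXsym dA ATs that])
  have tT: "t \<le> T" using t by auto
  have sub: "{t..T} \<subseteq> {0..T}" using t by auto
  have dA': "(A has_vector_derivative - (?C + A s ** ?Q ** A s + A s ** ?K + transpose ?K ** A s)) (at s within {t..T})"
    if "s \<in> {t..T}" for s
    using has_vector_derivative_within_subset[OF dA[rule_format, of s] sub] that sub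
    unfolding ric_alt by auto
  have cA: "continuous_on {t..T} A" using deriv_cont[OF dA'] .
  have "psd (- A t)"
  proof (rule flow_psd[OF tT, where F = "\<lambda>s. ?K + (1/2) *\<^sub>R (?Q ** A s)" and R = "\<lambda>s. - ?C"])
    fix s assume s: "s \<in> {t..T}"
    have d: "((\<lambda>s. - A s) has_vector_derivative - (- (?C + A s ** ?Q ** A s + A s ** ?K + transpose ?K ** A s))) (at s within {t..T})"
      by (intro derivative_intros dA'[OF s])
    have e: "- (- (?C + A s ** ?Q ** A s + A s ** ?K + transpose ?K ** A s))
       = - (- A s ** (?K + (1/2) *\<^sub>R (?Q ** A s)) + transpose (?K + (1/2) *\<^sub>R (?Q ** A s)) ** - A s) - - ?C"
      using Qs As[of s] s sub by (simp add: mm_simps algebra_simps)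
    show "((\<lambda>s. - A s) has_vector_derivative - (- A s ** (?K + (1/2) *\<^sub>R (?Q ** A s)) + transpose (?K + (1/2) *\<^sub>R (?Q ** A s)) ** - A s) - - ?C) (at s within {t..T})"
      using d unfolding e .
  next
    show "continuous_on {t..T} (\<lambda>s. ?K + (1/2) *\<^sub>R (?Q ** A s))"
      by (intro continuous_intros bounded_bilinear.continuous_on[OF bb_mm] cA)
    show "psd (- ?C)" if "s \<in> {t..T}" for s using Cn .
    show "psd (- A T)" using psd_congr[OF Omip, of P] by (simp add: AT)
  qed
  then show ?thesis by (simp add: psd_def nsd_def mv_neg_l)
qed

lemma ric_mono:
  fixes A1 A2 :: "real \<Rightarrow> real^'d^'d" and P :: "real^'d^'k"
  assumes Ssym: "transpose (matrix_inv SS) = matrix_inv SS" and SXsym: "transpose SX = SX"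
    and dA1: "\<forall>t\<in>{0..T}. (A1 has_vector_derivative - ric_expr g SS SX SSX B Th (A1 t)) (at t within {0..T})"
    and dA2: "\<forall>t\<in>{0..T}. (A2 has_vector_derivative - ric_expr g SS SX SSX B Th (A2 t)) (at t within {0..T})"
    and A1T: "A1 T = - (transpose P ** Om1 ** P)" and A2T: "A2 T = - (transpose P ** Om2 ** P)"
    and O1s: "transpose Om1 = Om1" and O2s: "transpose Om2 = Om2" and Op: "psd (Om1 - Om2)"
    and t: "t \<in> {0..T}"
  shows "psd (A2 t - A1 t)"
proof -
  let ?C = "ricC g SS B" and ?Q = "ricQ g SS SX SSX" and ?K = "ricK g SS SSX B Th"
  have Qs: "transpose ?Q = ?Q" by (rule ricQ_sym[OF Ssym SXsym])
  have A1s: "transpose (A1 s) = A1 s" if "s \<in> {0..T}" for s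
    by (rule ric_sym[OF Ssym SXsym dA1 _ that]) (use O1s in \<open>simp add: A1T mm_simps\<close>)
  have A2s: "transpose (A2 s) = A2 s" if "s \<in> {0..T}" for s
    by (rule ric_sym[OF Ssym SXsym dA2 _ that]) (use O2s in \<open>simp add: A2T mm_simps\<close>)
  have tT: "t \<le> T" using t by auto
  have sub: "{t..T} \<subseteq> {0..T}" using t by auto
  have dA1': "(A1 has_vector_derivative - (?C + A1 s ** ?Q ** A1 s + A1 s ** ?K + transpose ?K ** A1 s)) (at s within {t..T})"
    if "s \<in> {t..T}" for s
    using has_vector_derivative_within_subset[OF dA1[rule_format, of s] sub] that sub
    unfolding ric_alt by auto
  have dA2': "(A2 has_vector_derivative - (?C + A2 s ** ?Q ** A2 s + A2 s ** ?K + transpose ?K ** A2 s)) (at s within {t..T})"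
    if "s \<in> {t..T}" for s
    using has_vector_derivative_within_subset[OF dA2[rule_format, of s] sub] that sub
    unfolding ric_alt by auto
  have cA1: "continuous_on {t..T} A1" using deriv_cont[OF dA1'] .
  have cA2: "continuous_on {t..T} A2" using deriv_cont[OF dA2'] .
  show ?thesis
  proof (rule flow_psd[OF tT, where F = "\<lambda>s. ?K + (1/2) *\<^sub>R (?Q ** (A1 s + A2 s))" and R = "\<lambda>s. 0"])
    fix s assume s: "s \<in> {t..T}"
    have d: "((\<lambda>s. A2 s - A1 s) has_vector_derivative
        - (?C + A2 s ** ?Q ** A2 s + A2 s ** ?K + transpose ?K ** A2 s)
        - - (?C + A1 s ** ?Q ** A1 s + A1 s ** ?K + transpose ?K ** A1 s)) (at s within {t..T})"
      by (intro derivative_intros dA1'[OF s] dA2'[OF s])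
    have e: "- (?C + A2 s ** ?Q ** A2 s + A2 s ** ?K + transpose ?K ** A2 s)
        - - (?C + A1 s ** ?Q ** A1 s + A1 s ** ?K + transpose ?K ** A1 s)
       = - ((A2 s - A1 s) ** (?K + (1/2) *\<^sub>R (?Q ** (A1 s + A2 s))) + transpose (?K + (1/2) *\<^sub>R (?Q ** (A1 s + A2 s))) ** (A2 s - A1 s)) - 0"
      using Qs A1s[of s] A2s[of s] s sub by (simp add: mm_simps algebra_simps)
    show "((\<lambda>s. A2 s - A1 s) has_vector_derivative - ((A2 s - A1 s) ** (?K + (1/2) *\<^sub>R (?Q ** (A1 s + A2 s))) + transpose (?K + (1/2) *\<^sub>R (?Q ** (A1 s + A2 s))) ** (A2 s - A1 s)) - 0) (at s within {t..T})"
      using d unfolding e .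
  next
    show "continuous_on {t..T} (\<lambda>s. ?K + (1/2) *\<^sub>R (?Q ** (A1 s + A2 s)))"
      by (intro continuous_intros bounded_bilinear.continuous_on[OF bb_mm] cA1 cA2)
    show "psd (0::real^'d^'d)" if "s \<in> {t..T}" for s by (simp add: psd_def)
    have "A2 T - A1 T = transpose P ** (Om1 - Om2) ** P" by (simp add: A1T A2T mm_simps)
    then show "psd (A2 T - A1 T)" using psd_congr[OF Op, of P] by simp
  qed
qed

lemma minv_props:
  assumes "invertible (A::real^'n^'n)"
  shows "matrix_inv A ** A = mat 1" "A ** matrix_inv A = mat 1"
proof -
  have "\<exists>A'. A ** A' = mat 1 \<and> A' ** A = mat 1" using assms by (simp add: invertible_def)
  then have "A ** matrix_inv A = mat 1 \<and> matrix_inv A ** A = mat 1"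
    unfolding matrix_inv_def by (rule someI_ex)
  then show "matrix_inv A ** A = mat 1" "A ** matrix_inv A = mat 1" by auto
qed

lemma minv_mv:
  assumes "invertible (A::real^'n^'n)"
  shows "A *v (matrix_inv A *v u) = u" "matrix_inv A *v (A *v u) = u"
  using minv_props[OF assms] by (simp_all add: matrix_vector_mul_assoc)

lemma pd_invertible:
  assumes "\<And>v. v \<noteq> 0 \<Longrightarrow> v \<bullet> ((A::real^'n^'n) *v v) > 0"
  shows "invertible A"
proof -
  have "inj ((*v) A)"
  proof (rule injI)
    fix x y assume "A *v x = A *v y"
    then have "A *v (x - y) = 0" by (simp add: matrix_vector_mult_diff_distrib)
    then have "\<not> ((x - y) \<bullet> (A *v (x - y)) > 0)" by simp
    then show "x = y" using assms[of "x - y"] by auto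
  qed
  then have "\<exists>B. B ** A = mat 1" using matrix_left_invertible_injective by blast
  then show ?thesis using invertible_left_inverse by blast
qed

lemma minv_sym:
  assumes inv: "invertible (A::real^'n^'n)" and s: "transpose A = A"
  shows "transpose (matrix_inv A) = matrix_inv A"
proof -
  have "A ** transpose (matrix_inv A) = mat 1"
    using arg_cong[OF minv_props(1)[OF inv], of transpose] s by (simp add: matrix_transpose_mul)
  then have "matrix_inv A ** (A ** transpose (matrix_inv A)) = matrix_inv A" by simp
  then show ?thesis by (simp add: matrix_mul_assoc minv_props[OF inv])
qed

lemma minv_psd:
  assumes inv: "invertible (A::real^'n^'n)" and s: "transpose A = A" and p: "psd A"
  shows "psd (matrix_inv A)"
  unfolding psd_def
proof
  fix v :: "real^'n"
  let ?w = "matrix_inv A *v v"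
  have "v \<bullet> (matrix_inv A *v v) = (A *v ?w) \<bullet> ?w" by (simp add: minv_mv[OF inv])
  also have "\<dots> = ?w \<bullet> (A *v ?w)"
    using inner_tr[of A ?w ?w] s by (simp add: inner_commute)
  also have "\<dots> \<ge> 0" using p by (simp add: psd_def)
  finally show "0 \<le> v \<bullet> (matrix_inv A *v v)" by simp
qed

lemma norm_from_vec:
  fixes X :: "real^'n^'m"
  assumes "\<And>u. norm (X *v u) \<le> c * norm u"
  shows "norm X \<le> real (CARD('m) * CARD('n)) * c"
proof -
  have e: "\<bar>X $ i $ j\<bar> \<le> c" for i j
  proof -
    have "X $ i $ j = (X *v axis j 1) $ i"
      by (simp add: matrix_vector_mult_def axis_def if_distrib[of "\<lambda>x. _ * x"] cong: if_cong)
    then have "\<bar>X $ i $ j\<bar> \<le> norm (X *v axis j 1)" by (simp add: component_le_norm_cart)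
    also have "\<dots> \<le> c" using assms[of "axis j 1"] by simp
    finally show ?thesis .
  qed
  have "norm X \<le> (\<Sum>i\<in>UNIV. norm (X $ i))"
    unfolding norm_vec_def by (rule L2_set_le_sum) auto
  also have "\<dots> \<le> (\<Sum>i\<in>(UNIV::'m set). real CARD('n) * c)"
  proof (rule sum_mono)
    fix i
    have "norm (X $ i) \<le> (\<Sum>j\<in>UNIV. \<bar>X $ i $ j\<bar>)" by (rule norm_le_l1_cart)
    also have "\<dots> \<le> (\<Sum>j\<in>(UNIV::'n set). c)" by (rule sum_mono) (rule e)
    finally show "norm (X $ i) \<le> real CARD('n) * c" by simp
  qed
  finally show ?thesis by simp
qed

lemma pd_lower:
  assumes pd: "\<And>v. v \<noteq> 0 \<Longrightarrow> v \<bullet> ((A::real^'n^'n) *v v) > 0"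
  obtains l where "l > 0" "\<And>w. w \<bullet> (A *v w) \<ge> l * (norm w)^2"
proof -
  have c: "continuous_on (sphere 0 1) (\<lambda>v::real^'n. v \<bullet> (A *v v))"
    by (intro continuous_intros bounded_bilinear.continuous_on[OF bb_mv])
  have ne: "sphere (0::real^'n) 1 \<noteq> {}" by simp
  obtain u where u: "u \<in> sphere 0 1" and m: "\<And>v. v \<in> sphere 0 1 \<Longrightarrow> u \<bullet> (A *v u) \<le> v \<bullet> (A *v v)"
    using continuous_attains_inf[OF compact_sphere ne c] by blast
  have "u \<noteq> 0" using u by auto
  then have lp: "u \<bullet> (A *v u) > 0" by (rule pd)
  show ?thesis
  proof (rule that[OF lp])
    fix w :: "real^'n"
    show "w \<bullet> (A *v w) \<ge> (u \<bullet> (A *v u)) * (norm w)^2"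
    proof (cases "w = 0")
      case True then show ?thesis by simp
    next
      case False
      let ?v = "(1 / norm w) *\<^sub>R w"
      have "?v \<in> sphere 0 1" using False by simp
      then have "u \<bullet> (A *v u) \<le> ?v \<bullet> (A *v ?v)" by (rule m)
      also have "\<dots> = (w \<bullet> (A *v w)) / (norm w)^2"
        by (simp add: matrix_vector_mult_scaleR power2_eq_square)
      finally show ?thesis using False by (simp add: field_simps)
    qed
  qed
qed

lemma inv_deriv:
  fixes M :: "real \<Rightarrow> real^'n^'n"
  assumes dM: "(M has_vector_derivative M') (at t within S)" and tS: "t \<in> S"
    and inv: "\<And>s. s \<in> S \<Longrightarrow> invertible (M s)"
    and bnd: "\<And>s. s \<in> S \<Longrightarrow> norm (matrix_inv (M s)) \<le> B"
  shows "((\<lambda>s. matrix_inv (M s)) has_vector_derivative - (matrix_inv (M t) ** M' ** matrix_inv (M t))) (at t within S)"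
proof -
  define N where "N s = matrix_inv (M s)" for s
  obtain K where K0: "K > 0" and K: "\<And>X Y. norm ((X::real^'n^'n) ** (Y::real^'n^'n)) \<le> norm X * norm Y * K"
    using bounded_bilinear.pos_bounded[OF bb_mm] by blast
  have B0: "B \<ge> 0" using bnd[OF tS] norm_ge_zero order_trans by blast
  have id: "N s - N t = - (N s ** (M s - M t) ** N t)" if "s \<in> S" for s
  proof -
    have "N s ** (M s - M t) ** N t = (N s ** M s) ** N t - N s ** (M t ** N t)"
      by (simp add: mm_simps)
    also have "\<dots> = N t - N s" using minv_props[OF inv[OF that]] minv_props[OF inv[OF tS]] by (simp add: N_def)
    finally show ?thesis by simp
  qed
  have evS: "\<forall>\<^sub>F s in at t within S. s \<in> S" by (simp add: eventually_at_filter)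
  have "continuous (at t within S) M" by (rule has_vector_derivative_continuous[OF dM])
  then have "(M \<longlongrightarrow> M t) (at t within S)" by (simp add: continuous_within)
  then have cM: "((\<lambda>s. M s - M t) \<longlongrightarrow> 0) (at t within S)"
    using tendsto_diff[OF _ tendsto_const, of M "M t" _ "M t"] by simp
  have bN: "norm (N s - N t) \<le> norm (M s - M t) * (B * K * norm (N t) * K)" if "s \<in> S" for s
  proof -
    have "norm (N s - N t) = norm ((N s ** (M s - M t)) ** N t)" by (simp add: id[OF that])
    also have "\<dots> \<le> norm (N s ** (M s - M t)) * norm (N t) * K" by (rule K)
    also have "\<dots> \<le> (norm (N s) * norm (M s - M t) * K) * norm (N t) * K"
      by (intro mult_right_mono K) (use K0 in auto)
    also have "\<dots> \<le> (B * norm (M s - M t) * K) * norm (N t) * K"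
      using bnd[OF that] K0 by (intro mult_right_mono) (auto simp: N_def)
    finally show ?thesis by (simp add: ac_simps)
  qed
  have cN0: "((\<lambda>s. N s - N t) \<longlongrightarrow> 0) (at t within S)"
  proof (rule Lim_null_comparison)
    show "\<forall>\<^sub>F s in at t within S. norm (N s - N t) \<le> norm (M s - M t) * (B * K * norm (N t) * K)"
      using evS by eventually_elim (rule bN)
    show "((\<lambda>s. norm (M s - M t) * (B * K * norm (N t) * K)) \<longlongrightarrow> 0) (at t within S)"
      by (rule tendsto_mult_left_zero[OF tendsto_norm_zero[OF cM]])
  qed
  then have cN: "(N \<longlongrightarrow> N t) (at t within S)"
    using tendsto_add[OF cN0 tendsto_const, of "N t"] by simp
  let ?D = "- (N t ** M' ** N t)"
  let ?Q = "\<lambda>y. (1 / norm (y - t)) *\<^sub>R (M y - (M t + (y - t) *\<^sub>R M'))"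
  have dQ: "(?Q \<longlongrightarrow> 0) (at t within S)"
    using dM unfolding has_vector_derivative_def has_derivative_within by blast
  have t1: "((\<lambda>y. N y ** ?Q y ** N t) \<longlongrightarrow> N t ** 0 ** N t) (at t within S)"
    by (intro bounded_bilinear.tendsto[OF bb_mm] cN dQ tendsto_const)
  have t2: "((\<lambda>y. ((y - t) / norm (y - t)) *\<^sub>R ((N y - N t) ** M' ** N t)) \<longlongrightarrow> 0) (at t within S)"
  proof (rule Lim_null_comparison)
    show "\<forall>\<^sub>F y in at t within S. norm (((y - t) / norm (y - t)) *\<^sub>R ((N y - N t) ** M' ** N t)) \<le> norm (N y - N t) * (norm (M' ** N t) * K)"
    proof (rule always_eventually, rule allI)
      fix y
      have "norm (((y - t) / norm (y - t)) *\<^sub>R ((N y - N t) ** M' ** N t)) \<le> norm ((N y - N t) ** (M' ** N t))"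
        by (cases "y = t") (auto simp: matrix_mul_assoc)
      also have "\<dots> \<le> norm (N y - N t) * norm (M' ** N t) * K" by (rule K)
      finally show "norm (((y - t) / norm (y - t)) *\<^sub>R ((N y - N t) ** M' ** N t)) \<le> norm (N y - N t) * (norm (M' ** N t) * K)"
        by (simp add: ac_simps)
    qed
    show "((\<lambda>y. norm (N y - N t) * (norm (M' ** N t) * K)) \<longlongrightarrow> 0) (at t within S)"
      by (rule tendsto_mult_left_zero[OF tendsto_norm_zero[OF cN0]])
  qed
  have lim: "((\<lambda>y. (1 / norm (y - t)) *\<^sub>R (N y - (N t + (y - t) *\<^sub>R ?D))) \<longlongrightarrow> 0) (at t within S)"
  proof (rule Lim_transform_eventually)
    show "((\<lambda>y. - (N y ** ?Q y ** N t) - ((y - t) / norm (y - t)) *\<^sub>R ((N y - N t) ** M' ** N t)) \<longlongrightarrow> 0) (at t within S)"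
      using tendsto_diff[OF tendsto_minus[OF t1] t2] by (simp add: mm_simps)
    show "\<forall>\<^sub>F y in at t within S. - (N y ** ?Q y ** N t) - ((y - t) / norm (y - t)) *\<^sub>R ((N y - N t) ** M' ** N t)
        = (1 / norm (y - t)) *\<^sub>R (N y - (N t + (y - t) *\<^sub>R ?D))"
      using evS
    proof eventually_elim
      case (elim y)
      have "N y ** (M y - M t) ** N t = N t - N y" using id[OF elim] by (simp add: algebra_simps)
      then have e: "N y ** (M y ** N t) = N t - N y + N y ** (M t ** N t)" by (simp add: mm_simps algebra_simps)
      show ?case
        by (simp add: mm_simps e algebra_simps divide_inverse scaleR_scaleR)
    qed
  qed
  show ?thesis
    unfolding has_vector_derivative_def has_derivative_within N_def[symmetric]
    using lim bounded_linear_scaleR_left[of ?D] by simp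
qed

lemma ric_shift:
  fixes G A Th SX :: "real^'d^'d" and SSX be :: "real^'d^'n" and SS :: "real^'n^'n"
  assumes Gs: "transpose G = G" and Ss: "transpose (matrix_inv SS) = matrix_inv SS" and SXs: "transpose SX = SX"
  shows "- ric_expr g SS SX SSX (be - SSX ** G) (Th + SX ** G) A - (transpose Th ** G + G ** SX ** G + G ** Th)
     = - ric_expr g SS SX SSX be Th (A - G)"
  using assms by (simp add: ric_expr_def mm_simps algebra_simps)

lemma lin_alt: "lin_expr g rf SS SX SSX B a Th m A b =
     ((1 - g) / g) *\<^sub>R ((transpose B + A ** transpose SSX) ** matrix_inv SS)
         *v (SSX *v b + a - rf *\<^sub>R vec 1)
     + (A ** SX - transpose Th) *v b + A *v (Th *v m)"
  by (simp add: lin_expr_def matrix_vector_mul_assoc)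

lemma lin_shift:
  fixes G A Th SX :: "real^'d^'d" and SSX be :: "real^'d^'n" and SS :: "real^'n^'n" and h b mu :: "real^'d"
  assumes Gs: "transpose G = G" and SXs: "transpose SX = SX"
  shows "- (((1 - g) / g) *\<^sub>R ((transpose (be - SSX ** G) + A ** transpose SSX) ** matrix_inv SS)
         *v (SSX *v b + (al + SSX *v h) - rf *\<^sub>R vec 1)
     + (A ** SX - transpose (Th + SX ** G)) *v b + A *v (Th *v mu + SX *v h))
     + (transpose Th *v h + (G ** SX) *v h + (G ** Th) *v mu)
   = - lin_expr g rf SS SX SSX be al Th mu (A - G) (b + h)"
  using assms by (simp add: lin_expr_def mm_simps algebra_simps matrix_vector_mul_assoc[symmetric]
     matrix_vector_mult_add_rdistrib matrix_vector_mult_diff_rdistrib mv_scale_l mv_neg_l matrix_vector_mult_diff_distrib matrix_vector_right_distrib matrix_vector_mult_scaleR)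

lemma EE_T: "EE Th T T = mat 1"
  by (simp add: EE_def mexp_zero)

lemma EE_alt: "EE Th T t = mexp ((t - T) *\<^sub>R Th)"
  by (simp add: EE_def)

lemma EE_tr: "transpose (EE Th T t) = mexp (- (T - t) *\<^sub>R transpose Th)"
  by (simp add: EE_def mexp_tr)

lemma EE_tr': "transpose (EE Th T t) = EE (transpose Th) T t"
  by (simp add: EE_def mexp_tr)

lemma EE_comm: "Th ** EE Th T t = EE Th T t ** Th"
  by (simp add: EE_def mexp_comm)

lemma EE_deriv: "((\<lambda>t. EE Th T t) has_vector_derivative EE Th T t ** Th) (at t within S)"
proof -
  have d1: "((\<lambda>t. t - T) has_vector_derivative 1) (at t within S)"
    using has_vector_derivative_diff[OF has_vector_derivative_id has_vector_derivative_const] by simp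
  have d2: "((\<lambda>s. mexp (s *\<^sub>R Th)) has_vector_derivative Th ** mexp ((t - T) *\<^sub>R Th)) (at (t - T) within (\<lambda>t. t - T) ` S)"
    by (rule has_vector_derivative_at_within[OF mexp_deriv0])
  have "((\<lambda>s. mexp (s *\<^sub>R Th)) \<circ> (\<lambda>t. t - T) has_vector_derivative 1 *\<^sub>R (Th ** mexp ((t - T) *\<^sub>R Th))) (at t within S)"
    by (rule vector_diff_chain_within[OF d1 d2])
  then show ?thesis by (simp add: o_def EE_alt mexp_comm)
qed

lemma EEt_deriv: "((\<lambda>t. transpose (EE Th T t)) has_vector_derivative transpose Th ** transpose (EE Th T t)) (at t within S)"
  using bounded_linear.has_vector_derivative[OF bl_tr EE_deriv[of Th T t S]] by (simp add: matrix_transpose_mul)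

lemma Z_deriv:
  assumes lyap: "Th ** Sig + Sig ** transpose Th = SX"
  shows "((\<lambda>t. Sig - EE Th T t ** Sig ** transpose (EE Th T t)) has_vector_derivative
           - (EE Th T t ** SX ** transpose (EE Th T t))) (at t within S)"
proof -
  have "((\<lambda>t. Sig - EE Th T t ** Sig ** transpose (EE Th T t)) has_vector_derivative
     0 - ((EE Th T t ** Sig) ** (transpose Th ** transpose (EE Th T t)) + (EE Th T t ** Th ** Sig) ** transpose (EE Th T t))) (at t within S)"
  proof -
    have d1: "((\<lambda>t. EE Th T t ** Sig) has_vector_derivative EE Th T t ** Th ** Sig) (at t within S)"
      using bounded_linear.has_vector_derivative[OF bounded_bilinear.bounded_linear_left[OF bb_mm] EE_deriv[of Th T t S], of Sig] .
    show ?thesis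
      by (intro has_vector_derivative_diff has_vector_derivative_const bounded_bilinear.has_vector_derivative[OF bb_mm]
        d1 EEt_deriv)
  qed
  moreover have "0 - ((EE Th T t ** Sig) ** (transpose Th ** transpose (EE Th T t)) + (EE Th T t ** Th ** Sig) ** transpose (EE Th T t))
     = - (EE Th T t ** SX ** transpose (EE Th T t))"
    by (simp add: lyap[symmetric] mm_simps algebra_simps)
  ultimately show ?thesis by simp
qed

lemma psd_gram: "psd (B ** transpose (B::real^'m^'n))"
  unfolding psd_def
proof
  fix v :: "real^'n"
  have "v \<bullet> ((B ** transpose B) *v v) = (transpose B *v v) \<bullet> (transpose B *v v)"
    using inner_tr[of B v "transpose B *v v"] by (simp add: matrix_vector_mul_assoc[symmetric])
  then show "0 \<le> v \<bullet> ((B ** transpose B) *v v)" by simp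
qed

lemma Z_sym:
  assumes lyap: "Th ** Sig + Sig ** transpose Th = SX" and SXs: "transpose SX = SX" and tT: "t \<le> T"
  shows "transpose (Sig - EE Th T t ** Sig ** transpose (EE Th T t)) = Sig - EE Th T t ** Sig ** transpose (EE Th T t)"
proof -
  define Y where "Y s = (Sig - EE Th T s ** Sig ** transpose (EE Th T s)) - transpose (Sig - EE Th T s ** Sig ** transpose (EE Th T s))" for s
  have dY: "(Y has_derivative (\<lambda>h. 0)) (at s within {t..T})" for s
  proof -
    have "(Y has_vector_derivative - (EE Th T s ** SX ** transpose (EE Th T s)) - transpose (- (EE Th T s ** SX ** transpose (EE Th T s)))) (at s within {t..T})"
      unfolding Y_def by (intro has_vector_derivative_diff Z_deriv[OF lyap] bounded_linear.has_vector_derivative[OF bl_tr])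
    moreover have "- (EE Th T s ** SX ** transpose (EE Th T s)) - transpose (- (EE Th T s ** SX ** transpose (EE Th T s))) = 0"
      using SXs by (simp add: mm_simps)
    ultimately show ?thesis by (simp add: has_vector_derivative_def)
  qed
  obtain c where "\<forall>s\<in>{t..T}. Y s = c"
    using has_derivative_zero_constant[of "{t..T}" Y] dY by auto
  then have "Y t = Y T" using tT by auto
  also have "Y T = 0" by (simp add: Y_def EE_T tr_zero)
  finally show ?thesis by (simp add: Y_def)
qed

lemma Z_psd:
  fixes Sig :: "real^'d^'d"
  assumes lyap: "Th ** Sig + Sig ** transpose Th = SX" and SXp: "psd SX" and tT: "t \<le> T"
  shows "psd (Sig - EE Th T t ** Sig ** transpose (EE Th T t))"
  unfolding psd_def
proof
  fix v :: "real^'d"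
  define f where "f s = v \<bullet> ((Sig - EE Th T s ** Sig ** transpose (EE Th T s)) *v v)" for s
  have df: "(f has_real_derivative v \<bullet> (- (EE Th T s ** SX ** transpose (EE Th T s)) *v v)) (at s within {t..T})" for s
  proof -
    have "((\<lambda>s. (Sig - EE Th T s ** Sig ** transpose (EE Th T s)) *v v) has_vector_derivative
          - (EE Th T s ** SX ** transpose (EE Th T s)) *v v) (at s within {t..T})"
      by (rule bounded_linear.has_vector_derivative[OF bounded_bilinear.bounded_linear_left[OF bb_mv] Z_deriv[OF lyap]])
    from bounded_linear.has_vector_derivative[OF bounded_linear_inner_right this, of v]
    show ?thesis unfolding f_def has_real_derivative_iff_has_vector_derivative .
  qed
  have "f T \<le> f t"
  proof (rule decr_within[OF tT df])
    fix s
    have "0 \<le> (transpose (EE Th T s) *v v) \<bullet> (SX *v (transpose (EE Th T s) *v v))"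
      using SXp by (simp add: psd_def)
    also have "\<dots> = v \<bullet> ((EE Th T s ** SX ** transpose (EE Th T s)) *v v)"
      using inner_tr[of "EE Th T s" v "SX *v (transpose (EE Th T s) *v v)"]
      by (simp add: matrix_vector_mul_assoc[symmetric])
    finally show "v \<bullet> (- (EE Th T s ** SX ** transpose (EE Th T s)) *v v) \<le> 0"
      by (simp add: mv_neg_l)
  qed
  moreover have "f T = 0" by (simp add: f_def EE_T)
  ultimately show "0 \<le> v \<bullet> ((Sig - EE Th T t ** Sig ** transpose (EE Th T t)) *v v)"
    by (simp add: f_def)
qed

lemma spd_facts:
  assumes "sym_pos_def (Om::real^'k^'k)"
  shows "invertible Om" "transpose (matrix_inv Om) = matrix_inv Om" "psd (matrix_inv Om)" "transpose Om = Om"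
proof -
  have s: "transpose Om = Om" and pd: "\<And>v. v \<noteq> 0 \<Longrightarrow> v \<bullet> (Om *v v) > 0"
    using assms by (auto simp: sym_pos_def_def)
  show i: "invertible Om" by (rule pd_invertible[OF pd])
  show "transpose (matrix_inv Om) = matrix_inv Om" by (rule minv_sym[OF i s])
  have "psd Om" unfolding psd_def using pd by (metis inner_zero_left less_eq_real_def matrix_vector_mult_0_right)
  then show "psd (matrix_inv Om)" by (rule minv_psd[OF i s])
  show "transpose Om = Om" by (rule s)
qed

lemma psd_scale: "psd X \<Longrightarrow> c \<ge> 0 \<Longrightarrow> psd (c *\<^sub>R X)"
  by (simp add: psd_def mv_scale_l)

theorem theorem5p2:
  fixes gam rf T :: real
    and Th :: "real^'d^'d" and mu :: "real^'d" and LX :: "real^'w^'d"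
    and al :: "real^'n" and be :: "real^'d^'n" and LS :: "real^'w^'n"
    and P :: "real^'d^'k" and Om :: "real^'k^'k" and Sig :: "real^'d^'d"
    and y :: "real^'k"
    and A :: "real \<Rightarrow> real^'d^'d" and b :: "real \<Rightarrow> real^'d"
  defines "SX \<equiv> LX ** transpose LX"
    and "SS \<equiv> LS ** transpose LS"
    and "SSX \<equiv> LS ** transpose LX"
  assumes gam: "gam > 1"
    and T: "T > 0"
    and Th_eig: "eigs_pos_real_part Th"
    and LX_rank: "rank LX = CARD('d)"
    and LS_rank: "rank LS = CARD('n)"
    and Om_pd: "sym_pos_def Om"
    and Sig_lyap: "Th ** Sig + Sig ** transpose Th = SX"
    and Theta_t_inv: "\<forall>t\<in>{0..T}. invertible (Theta_t Th LX P Om Sig T t)"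
    and A_ode: "\<forall>t\<in>{0..T}. (A has_vector_derivative
               - ric_expr gam SS SX SSX (beta_t Th LX be LS P Om Sig T t)
                   (Theta_t Th LX P Om Sig T t) (A t)) (at t within {0..T})"
    and A_T: "A T = 0"
    and b_ode: "\<forall>t\<in>{0..T}. (b has_vector_derivative
               - lin_expr gam rf SS SX SSX (beta_t Th LX be LS P Om Sig T t)
                   (alpha_t Th mu LX al LS P Om Sig T y t) (Theta_t Th LX P Om Sig T t)
                   (mu_t Th mu LX P Om Sig T y t) (A t) (b t)) (at t within {0..T})"
    and b_T: "b T = 0"
  shows
   "(\<exists>A1 :: real \<Rightarrow> real^'d^'d. \<exists>b1 :: real \<Rightarrow> real^'d.
       (\<forall>t\<in>{0..T}. (A1 has_vector_derivative - ric_expr gam SS SX SSX be Th (A1 t))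
                     (at t within {0..T}))
     \<and> A1 T = - (transpose P ** matrix_inv Om ** P)
     \<and> (\<forall>t\<in>{0..T}. (b1 has_vector_derivative
                     - lin_expr gam rf SS SX SSX be al Th mu (A1 t) (b1 t)) (at t within {0..T}))
     \<and> b1 T = (transpose P ** matrix_inv Om) *v y
     \<and> (\<forall>t\<in>{0..T}. \<forall>x :: real^'d.
          (1 / gam) *\<^sub>R (matrix_inv SS *v
              (alpha_t Th mu LX al LS P Om Sig T y t + beta_t Th LX be LS P Om Sig T t *v x - rf *\<^sub>R vec 1))
          + (1 / gam) *\<^sub>R ((matrix_inv SS ** SSX) *v (A t *v x + b t))
        = (1 / gam) *\<^sub>R (matrix_inv SS *v (al + be *v x - rf *\<^sub>R vec 1))
          + (1 / gam) *\<^sub>R ((matrix_inv SS ** SSX) *v (A1 t *v x + b1 t)))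
     \<and> (\<forall>t\<in>{0..T}. nsd (A1 t)))
    \<and> (\<forall>(Om1 :: real^'k^'k) (Om2 :: real^'k^'k) (A11 :: real \<Rightarrow> real^'d^'d) (A12 :: real \<Rightarrow> real^'d^'d).
         sym_pos_def Om1 \<longrightarrow> sym_pos_def Om2 \<longrightarrow>
         loewner_le (matrix_inv Om2) (matrix_inv Om1) \<longrightarrow>
         (\<forall>t\<in>{0..T}. (A11 has_vector_derivative - ric_expr gam SS SX SSX be Th (A11 t))
                        (at t within {0..T})) \<longrightarrow>
         A11 T = - (transpose P ** matrix_inv Om1 ** P) \<longrightarrow>
         (\<forall>t\<in>{0..T}. (A12 has_vector_derivative - ric_expr gam SS SX SSX be Th (A12 t))
                        (at t within {0..T})) \<longrightarrow>
         A12 T = - (transpose P ** matrix_inv Om2 ** P) \<longrightarrow>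
         (\<forall>t\<in>{0..T}. loewner_le (A11 t) (A12 t)))"
  proof -
  note SXd = \<open>SX \<equiv> LX ** transpose LX\<close>
  note SSd = \<open>SS \<equiv> LS ** transpose LS\<close>
  note SSXd = \<open>SSX \<equiv> LS ** transpose LX\<close>
  have SXs: "transpose SX = SX" by (simp add: SXd matrix_transpose_mul)
  have SXp: "psd SX" using psd_gram[of LX] by (simp add: SXd)
  have SSs: "transpose SS = SS" by (simp add: SSd matrix_transpose_mul)
  have injLS: "inj ((*v) (transpose LS))"
    using LS_rank full_rank_injective[of "transpose LS"] rank_transpose[of LS] by simp
  have SSpd: "v \<bullet> (SS *v v) > 0" if "v \<noteq> 0" for v
  proof -
    have "transpose LS *v v \<noteq> 0"
      using that injLS by (metis injD matrix_vector_mult_0_right)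
    moreover have "v \<bullet> (SS *v v) = (transpose LS *v v) \<bullet> (transpose LS *v v)"
      using inner_tr[of LS v "transpose LS *v v"] by (simp add: SSd matrix_vector_mul_assoc[symmetric])
    ultimately show ?thesis by simp
  qed
  have SSsp: "sym_pos_def SS" using SSs SSpd by (simp add: sym_pos_def_def)
  note SSf = spd_facts[OF SSsp]
  have Ss: "transpose (matrix_inv SS) = matrix_inv SS" by (rule SSf(2))
  have cneg: "(1 - gam) / gam < 0" using gam by (simp add: divide_neg_pos)
  have Cn: "psd (- ricC gam SS be)"
  proof -
    have "- ricC gam SS be = (- ((1 - gam) / gam)) *\<^sub>R (transpose be ** matrix_inv SS ** be)"
      by (simp add: ricC_def)
    then show ?thesis using psd_scale[OF psd_congr[OF SSf(3), of be], of "- ((1 - gam) / gam)"] cneg by simp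
  qed
  note Omf = spd_facts[OF Om_pd]
  have part2: "\<forall>(Om1 :: real^'k^'k) (Om2 :: real^'k^'k) (A11 :: real \<Rightarrow> real^'d^'d) (A12 :: real \<Rightarrow> real^'d^'d).
         sym_pos_def Om1 \<longrightarrow> sym_pos_def Om2 \<longrightarrow>
         loewner_le (matrix_inv Om2) (matrix_inv Om1) \<longrightarrow>
         (\<forall>t\<in>{0..T}. (A11 has_vector_derivative - ric_expr gam SS SX SSX be Th (A11 t))
                        (at t within {0..T})) \<longrightarrow>
         A11 T = - (transpose P ** matrix_inv Om1 ** P) \<longrightarrow>
         (\<forall>t\<in>{0..T}. (A12 has_vector_derivative - ric_expr gam SS SX SSX be Th (A12 t))
                        (at t within {0..T})) \<longrightarrow>
         A12 T = - (transpose P ** matrix_inv Om2 ** P) \<longrightarrow>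
         (\<forall>t\<in>{0..T}. loewner_le (A11 t) (A12 t))"
  proof (intro allI impI ballI)
    fix Om1 Om2 :: "real^'k^'k" and A11 A12 :: "real \<Rightarrow> real^'d^'d" and t
    assume o1: "sym_pos_def Om1" and o2: "sym_pos_def Om2"
      and le: "loewner_le (matrix_inv Om2) (matrix_inv Om1)"
      and d1: "\<forall>t\<in>{0..T}. (A11 has_vector_derivative - ric_expr gam SS SX SSX be Th (A11 t)) (at t within {0..T})"
      and T1: "A11 T = - (transpose P ** matrix_inv Om1 ** P)"
      and d2: "\<forall>t\<in>{0..T}. (A12 has_vector_derivative - ric_expr gam SS SX SSX be Th (A12 t)) (at t within {0..T})"
      and T2: "A12 T = - (transpose P ** matrix_inv Om2 ** P)"
      and t: "t \<in> {0..T}"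
    show "loewner_le (A11 t) (A12 t)"
      unfolding loewner_le_def
      by (rule ric_mono[OF Ss SXs d1 d2 T1 T2 spd_facts(2)[OF o1] spd_facts(2)[OF o2] le[unfolded loewner_le_def] t])
  qed
  define E where "E t = EE Th T t" for t
  define Z where "Z t = Sig - E t ** Sig ** transpose (E t)" for t
  define M where "M t = P ** Z t ** transpose P + Om" for t
  define N where "N t = matrix_inv (M t)" for t
  define H where "H t = transpose (P ** E t)" for t
  define G where "G t = H t ** N t ** transpose (H t)" for t
  define z where "z t = y - (P ** (mat 1 - E t)) *v mu" for t
  define h where "h t = H t *v (N t *v z t)" for t
  have PE: "P ** E t = transpose (H t)" for t by (simp add: H_def)
  have Ht: "H t = transpose (E t) ** transpose P" for t by (simp add: H_def matrix_transpose_mul)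
  obtain l where l0: "l > 0" and l: "\<And>w. w \<bullet> (Om *v w) \<ge> l * (norm w)^2"
    using pd_lower[of Om] Om_pd unfolding sym_pos_def_def by blast
  have Mlow: "w \<bullet> (M t *v w) \<ge> l * (norm w)^2" if "t \<le> T" for t w
  proof -
    have "psd (Z t)" unfolding Z_def E_def by (rule Z_psd[OF Sig_lyap SXp that])
    then have "0 \<le> (transpose P *v w) \<bullet> (Z t *v (transpose P *v w))" by (simp add: psd_def)
    also have "\<dots> = w \<bullet> ((P ** Z t ** transpose P) *v w)"
      using inner_tr[of P w "Z t *v (transpose P *v w)"] by (simp add: matrix_vector_mul_assoc[symmetric])
    finally have "0 \<le> w \<bullet> ((P ** Z t ** transpose P) *v w)" .
    then show ?thesis using l[of w] by (simp add: M_def matrix_vector_mult_add_rdistrib inner_add_right)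
  qed
  have Mpd: "w \<bullet> (M t *v w) > 0" if "t \<le> T" "w \<noteq> 0" for t w
  proof -
    have "norm w > 0" using that(2) by simp
    then have "l * (norm w)^2 > 0" using l0 by simp
    then show ?thesis using Mlow[OF that(1), of w] by linarith
  qed
  have Minv: "invertible (M t)" if "t \<le> T" for t by (rule pd_invertible[OF Mpd[OF that]])
  have Zs: "transpose (Z t) = Z t" if "t \<le> T" for t
    using Z_sym[OF Sig_lyap SXs that] by (simp add: Z_def E_def)
  have Ms: "transpose (M t) = M t" if "t \<le> T" for t
  proof -
    have "transpose (M t) = P ** transpose (Z t) ** transpose P + transpose Om"
      by (simp add: M_def matrix_transpose_mul matrix_mul_assoc tr_add)
    then show ?thesis using Zs[OF that] Omf(4) by (simp add: M_def)
  qed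
  have Ns: "transpose (N t) = N t" if "t \<le> T" for t unfolding N_def by (rule minv_sym[OF Minv[OF that] Ms[OF that]])
  have Nb: "norm (N t) \<le> real (CARD('k) * CARD('k)) * (1 / l)" if "t \<le> T" for t
  proof (unfold N_def, rule norm_from_vec)
    fix u :: "real^'k"
    let ?w = "matrix_inv (M t) *v u"
    have "l * (norm ?w)^2 \<le> ?w \<bullet> (M t *v ?w)" by (rule Mlow[OF that])
    also have "\<dots> = ?w \<bullet> u" by (simp add: minv_mv[OF Minv[OF that]])
    also have "\<dots> \<le> norm ?w * norm u" by (rule norm_cauchy_schwarz)
    finally have "l * (norm ?w)^2 \<le> norm ?w * norm u" .
    then have "norm ?w \<le> norm u / l"
      using l0 by (cases "norm ?w = 0") (auto simp: power2_eq_square field_simps)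
    then show "norm ?w \<le> 1 / l * norm u" by simp
  qed
  have Gs: "transpose (G t) = G t" if "t \<le> T" for t
    using Ns[OF that] by (simp add: G_def matrix_transpose_mul matrix_mul_assoc)
  have eta_eq: "eta Th LX P Om Sig T t = transpose LX ** H t ** N t" if "t \<le> T" for t
  proof -
    have "P ** (Sig - EE Th T t ** Sig ** mexp (- (T - t) *\<^sub>R transpose Th)) ** transpose P + Om = M t"
      by (simp add: M_def Z_def E_def EE_tr)
    moreover have "transpose (P ** EE Th T t ** LX) = transpose LX ** H t"
      by (simp add: H_def E_def matrix_transpose_mul)
    ultimately show ?thesis by (simp add: eta_def N_def)
  qed
  have PEE: "P ** EE Th T t = transpose (H t)" for t by (simp add: H_def E_def)
  have beta_eq: "beta_t Th LX be LS P Om Sig T t = be - SSX ** G t" if "t \<le> T" for t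
  proof -
    have "LS ** eta Th LX P Om Sig T t ** P ** EE Th T t = LS ** transpose LX ** (H t ** N t ** (P ** EE Th T t))"
      by (simp add: eta_eq[OF that] matrix_mul_assoc)
    then show ?thesis by (simp add: beta_t_def SSXd G_def PEE matrix_mul_assoc)
  qed
  have Theta_eq: "Theta_t Th LX P Om Sig T t = Th + SX ** G t" if "t \<le> T" for t
  proof -
    have "LX ** eta Th LX P Om Sig T t ** P ** EE Th T t = LX ** transpose LX ** (H t ** N t ** (P ** EE Th T t))"
      by (simp add: eta_eq[OF that] matrix_mul_assoc)
    then show ?thesis by (simp add: Theta_t_def SXd G_def PEE matrix_mul_assoc)
  qed
  have alpha_eq: "alpha_t Th mu LX al LS P Om Sig T y t = al + SSX *v h t" if "t \<le> T" for t
    by (simp add: alpha_t_def eta_eq[OF that] SSXd h_def z_def E_def matrix_vector_mul_assoc matrix_mul_assoc)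
  have ThMu: "Theta_t Th LX P Om Sig T t *v mu_t Th mu LX P Om Sig T y t = Th *v mu + SX *v h t"
    if t: "t \<in> {0..T}" for t
  proof -
    have tT: "t \<le> T" using t by auto
    have i: "invertible (Theta_t Th LX P Om Sig T t)" using Theta_t_inv t by blast
    have LXeta: "LX ** eta Th LX P Om Sig T t = SX ** H t ** N t"
      by (simp add: eta_eq[OF tT] SXd matrix_mul_assoc)
    have "Theta_t Th LX P Om Sig T t *v mu_t Th mu LX P Om Sig T y t
        = Theta_t Th LX P Om Sig T t *v mu + (LX ** eta Th LX P Om Sig T t) *v (y - P *v mu)"
      by (simp add: mu_t_def matrix_vector_right_distrib minv_mv[OF i])
    also have "\<dots> = Th *v mu + SX *v h t"
      by (simp add: Theta_eq[OF tT] LXeta h_def z_def G_def PE matrix_vector_mul_assoc[symmetric]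
          matrix_vector_mult_add_rdistrib matrix_vector_right_distrib matrix_vector_mult_diff_distrib mm_diff_r
          matrix_vector_mult_diff_rdistrib algebra_simps)
    finally show ?thesis .
  qed
  have dE: "(E has_vector_derivative E t ** Th) (at t within S)" for t S
    unfolding E_def[abs_def] by (rule EE_deriv)
  have dH: "(H has_vector_derivative transpose Th ** H t) (at t within S)" for t S
  proof -
    have bl: "bounded_linear (\<lambda>X. transpose (P ** X))"
      by (rule bounded_linear_compose[OF bl_tr bounded_bilinear.bounded_linear_right[OF bb_mm]])
    have "(H has_vector_derivative transpose (P ** (E t ** Th))) (at t within S)"
      unfolding H_def[abs_def] by (rule bounded_linear.has_vector_derivative[OF bl dE])
    moreover have "transpose (P ** (E t ** Th)) = transpose Th ** H t"
      by (simp add: H_def matrix_transpose_mul matrix_mul_assoc)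
    ultimately show ?thesis by simp
  qed
  have dM: "(M has_vector_derivative - (transpose (H t) ** SX ** H t)) (at t within S)" for t S
  proof -
    have bl: "bounded_linear (\<lambda>X. P ** X ** transpose P)"
      by (rule bounded_linear_compose[OF bounded_bilinear.bounded_linear_left[OF bb_mm] bounded_bilinear.bounded_linear_right[OF bb_mm]])
    have "((\<lambda>t. P ** Z t ** transpose P) has_vector_derivative P ** (- (E t ** SX ** transpose (E t))) ** transpose P) (at t within S)"
      by (rule bounded_linear.has_vector_derivative[OF bl]) (unfold Z_def[abs_def] E_def, rule Z_deriv[OF Sig_lyap])
    then have "(M has_vector_derivative P ** (- (E t ** SX ** transpose (E t))) ** transpose P + 0) (at t within S)"
      unfolding M_def[abs_def] by (intro has_vector_derivative_add has_vector_derivative_const)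
    moreover have "P ** (- (E t ** SX ** transpose (E t))) ** transpose P + 0 = - (transpose (H t) ** SX ** H t)"
      by (simp add: Ht mm_simps)
    ultimately show ?thesis by simp
  qed
  have dN: "(N has_vector_derivative N t ** (transpose (H t) ** SX ** H t) ** N t) (at t within {0..T})"
    if t: "t \<in> {0..T}" for t
  proof -
    have "((\<lambda>s. matrix_inv (M s)) has_vector_derivative - (matrix_inv (M t) ** (- (transpose (H t) ** SX ** H t)) ** matrix_inv (M t))) (at t within {0..T})"
      by (rule inv_deriv[OF dM t]) (auto intro: Minv Nb[unfolded N_def])
    then show ?thesis by (simp add: N_def[symmetric] mm_simps)
  qed
  have dG: "(G has_vector_derivative transpose Th ** G t + G t ** SX ** G t + G t ** Th) (at t within {0..T})"
    if t: "t \<in> {0..T}" for t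
  proof -
    have d1: "((\<lambda>t. H t ** N t) has_vector_derivative H t ** (N t ** (transpose (H t) ** SX ** H t) ** N t) + (transpose Th ** H t) ** N t) (at t within {0..T})"
      by (rule bounded_bilinear.has_vector_derivative[OF bb_mm dH dN[OF t]])
    have d2: "((\<lambda>t. transpose (H t)) has_vector_derivative transpose (transpose Th ** H t)) (at t within {0..T})"
      by (rule bounded_linear.has_vector_derivative[OF bl_tr dH])
    have "(G has_vector_derivative (H t ** N t) ** transpose (transpose Th ** H t) + (H t ** (N t ** (transpose (H t) ** SX ** H t) ** N t) + (transpose Th ** H t) ** N t) ** transpose (H t)) (at t within {0..T})"
      unfolding G_def[abs_def] by (rule bounded_bilinear.has_vector_derivative[OF bb_mm d1 d2])
    moreover have "(H t ** N t) ** transpose (transpose Th ** H t) + (H t ** (N t ** (transpose (H t) ** SX ** H t) ** N t) + (transpose Th ** H t) ** N t) ** transpose (H t)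
       = transpose Th ** G t + G t ** SX ** G t + G t ** Th"
      by (simp add: G_def mm_simps algebra_simps)
    ultimately show ?thesis by simp
  qed
  have dz: "(z has_vector_derivative transpose (H t) *v (Th *v mu)) (at t within S)" for t S
  proof -
    have bl: "bounded_linear (\<lambda>X. (P ** X) *v mu)"
      by (rule bounded_linear_compose[OF bounded_bilinear.bounded_linear_left[OF bb_mv] bounded_bilinear.bounded_linear_right[OF bb_mm]])
    have "((\<lambda>t. (P ** E t) *v mu) has_vector_derivative (P ** (E t ** Th)) *v mu) (at t within S)"
      by (rule bounded_linear.has_vector_derivative[OF bl dE])
    then have "((\<lambda>t. (y - P *v mu) + (P ** E t) *v mu) has_vector_derivative 0 + (P ** (E t ** Th)) *v mu) (at t within S)"
      by (intro has_vector_derivative_add has_vector_derivative_const)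
    moreover have "z = (\<lambda>t. (y - P *v mu) + (P ** E t) *v mu)"
      by (simp add: z_def fun_eq_iff mm_diff_r matrix_vector_mult_diff_rdistrib)
    moreover have "0 + (P ** (E t ** Th)) *v mu = transpose (H t) *v (Th *v mu)"
      by (simp add: PE[symmetric] matrix_vector_mul_assoc matrix_mul_assoc)
    ultimately show ?thesis by simp
  qed
  have dh: "(h has_vector_derivative transpose Th *v h t + (G t ** SX) *v h t + (G t ** Th) *v mu) (at t within {0..T})"
    if t: "t \<in> {0..T}" for t
  proof -
    have d1: "((\<lambda>t. N t *v z t) has_vector_derivative N t *v (transpose (H t) *v (Th *v mu)) + (N t ** (transpose (H t) ** SX ** H t) ** N t) *v z t) (at t within {0..T})"
      by (rule bounded_bilinear.has_vector_derivative[OF bb_mv dN[OF t] dz])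
    have "(h has_vector_derivative H t *v (N t *v (transpose (H t) *v (Th *v mu)) + (N t ** (transpose (H t) ** SX ** H t) ** N t) *v z t) + (transpose Th ** H t) *v (N t *v z t)) (at t within {0..T})"
      unfolding h_def[abs_def] by (rule bounded_bilinear.has_vector_derivative[OF bb_mv dH d1])
    moreover have "H t *v (N t *v (transpose (H t) *v (Th *v mu)) + (N t ** (transpose (H t) ** SX ** H t) ** N t) *v z t) + (transpose Th ** H t) *v (N t *v z t)
       = transpose Th *v h t + (G t ** SX) *v h t + (G t ** Th) *v mu"
      by (simp add: G_def h_def matrix_vector_mul_assoc[symmetric] matrix_vector_right_distrib algebra_simps)
    ultimately show ?thesis by simp
  qed
  have ET: "E T = mat 1" by (simp add: E_def EE_T)
  have HT: "H T = transpose P" by (simp add: H_def ET)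
  have MT: "M T = Om" by (simp add: M_def Z_def ET mm_zero_l mm_zero_r)
  have GT: "G T = transpose P ** matrix_inv Om ** P" by (simp add: G_def HT N_def MT)
  have hT: "h T = (transpose P ** matrix_inv Om) *v y"
    by (simp add: h_def HT N_def MT z_def ET matrix_vector_mul_assoc)
  have A1ode: "\<forall>t\<in>{0..T}. ((\<lambda>t. A t - G t) has_vector_derivative - ric_expr gam SS SX SSX be Th (A t - G t)) (at t within {0..T})"
  proof
    fix t assume t: "t \<in> {0..T}"
    then have tT: "t \<le> T" by auto
    have "((\<lambda>t. A t - G t) has_vector_derivative
        - ric_expr gam SS SX SSX (be - SSX ** G t) (Th + SX ** G t) (A t) - (transpose Th ** G t + G t ** SX ** G t + G t ** Th)) (at t within {0..T})"
      using has_vector_derivative_diff[OF A_ode[rule_format, OF t] dG[OF t]] by (simp add: beta_eq[OF tT] Theta_eq[OF tT])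
    then show "((\<lambda>t. A t - G t) has_vector_derivative - ric_expr gam SS SX SSX be Th (A t - G t)) (at t within {0..T})"
      by (simp only: ric_shift[OF Gs[OF tT] Ss SXs])
  qed
  have A1T: "A T - G T = - (transpose P ** matrix_inv Om ** P)" by (simp add: A_T GT)
  have b1ode: "\<forall>t\<in>{0..T}. ((\<lambda>t. b t + h t) has_vector_derivative - lin_expr gam rf SS SX SSX be al Th mu (A t - G t) (b t + h t)) (at t within {0..T})"
  proof
    fix t assume t: "t \<in> {0..T}"
    then have tT: "t \<le> T" by auto
    have "((\<lambda>t. b t + h t) has_vector_derivative
        - (((1 - gam) / gam) *\<^sub>R ((transpose (be - SSX ** G t) + A t ** transpose SSX) ** matrix_inv SS)
         *v (SSX *v b t + (al + SSX *v h t) - rf *\<^sub>R vec 1)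
         + (A t ** SX - transpose (Th + SX ** G t)) *v b t + A t *v (Th *v mu + SX *v h t))
        + (transpose Th *v h t + (G t ** SX) *v h t + (G t ** Th) *v mu)) (at t within {0..T})"
      using has_vector_derivative_add[OF b_ode[rule_format, OF t] dh[OF t]]
      by (simp only: lin_alt beta_eq[OF tT] alpha_eq[OF tT] ThMu[OF t] flip: Theta_eq[OF tT])
    then show "((\<lambda>t. b t + h t) has_vector_derivative - lin_expr gam rf SS SX SSX be al Th mu (A t - G t) (b t + h t)) (at t within {0..T})"
      by (simp only: lin_shift[OF Gs[OF tT] SXs])
  qed
  have b1T: "b T + h T = (transpose P ** matrix_inv Om) *v y" by (simp add: b_T hT)
  have eqn: "\<forall>t\<in>{0..T}. \<forall>x :: real^'d.
          (1 / gam) *\<^sub>R (matrix_inv SS *v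
              (alpha_t Th mu LX al LS P Om Sig T y t + beta_t Th LX be LS P Om Sig T t *v x - rf *\<^sub>R vec 1))
          + (1 / gam) *\<^sub>R ((matrix_inv SS ** SSX) *v (A t *v x + b t))
        = (1 / gam) *\<^sub>R (matrix_inv SS *v (al + be *v x - rf *\<^sub>R vec 1))
          + (1 / gam) *\<^sub>R ((matrix_inv SS ** SSX) *v ((A t - G t) *v x + (b t + h t)))"
  proof (intro ballI allI)
    fix t and x :: "real^'d" assume t: "t \<in> {0..T}"
    then have tT: "t \<le> T" by auto
    show "(1 / gam) *\<^sub>R (matrix_inv SS *v
              (alpha_t Th mu LX al LS P Om Sig T y t + beta_t Th LX be LS P Om Sig T t *v x - rf *\<^sub>R vec 1))
          + (1 / gam) *\<^sub>R ((matrix_inv SS ** SSX) *v (A t *v x + b t))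
        = (1 / gam) *\<^sub>R (matrix_inv SS *v (al + be *v x - rf *\<^sub>R vec 1))
          + (1 / gam) *\<^sub>R ((matrix_inv SS ** SSX) *v ((A t - G t) *v x + (b t + h t)))"
      by (simp add: alpha_eq[OF tT] beta_eq[OF tT] matrix_vector_mul_assoc[symmetric]
          matrix_vector_mult_add_rdistrib matrix_vector_mult_diff_rdistrib matrix_vector_right_distrib
          matrix_vector_mult_diff_distrib algebra_simps scaleR_right_distrib scaleR_right_diff_distrib)
  qed
  have nsdA1: "\<forall>t\<in>{0..T}. nsd (A t - G t)"
  proof
    fix t assume t: "t \<in> {0..T}"
    show "nsd (A t - G t)"
      by (rule ric_nsd[OF Ss SXs A1ode A1T Omf(2) Omf(3) Cn t])
  qed
  show ?thesis
    using A1ode A1T b1ode b1T eqn nsdA1 part2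
    by (intro conjI exI[of _ "\<lambda>t. A t - G t"] exI[of _ "\<lambda>t. b t + h t"]) auto
qed

end
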